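(* Let $G$ be a graph and $u$ a vertex of $G$ satisfying the NC property in $G$. Let $G'$ be the graph obtained from $G$ by locally chordalizing all holes in $\mathcal H(G,u)$ by $u$. Then every hole of $G'$ is a hole of $G$ (no new hole is created).
   Context: All graphs are finite and simple. A hole of $G$ is an induced cycle of length at least $4$. $\mathcal H(G)$ is the set of holes of $G$ and $\mathcal H(G,u)$ the set of holes containing $u$. A vertex $u$ satisfies the NC property in $G$ if there are no holes $H\in\mathcal H(G,u)$ and $H'\in\mathcal H(G)\setminus\mathcal H(G,u)$ sharing two consecutive edges, i.e. two distinct edges with a common end vertex that both lie on $H$ and on $H'$. Locally chordalizing all holes in $\mathcal H(G,u)$ by $u$ produces the graph $G'$ with $V(G')=V(G)$ and $E(G')=E(G)\cup\{uw: w\neq u,\ w\in V(H)\text{ for some }H\in\mathcal H(G,u)\}$. *)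

theory Defs
  imports Main
begin

definition graph :: "'a set \<Rightarrow> 'a set set \<Rightarrow> bool" where
  "graph V E \<longleftrightarrow> finite V \<and> (\<forall>e\<in>E. \<exists>x y. x \<noteq> y \<and> x \<in> V \<and> y \<in> V \<and> e = {x, y})"

definition is_hole :: "'a set \<Rightarrow> 'a set set \<Rightarrow> 'a set \<Rightarrow> bool" where
  "is_hole V E C \<longleftrightarrow> C \<subseteq> V \<and>
     (\<exists>xs. distinct xs \<and> set xs = C \<and> length xs \<ge> 4 \<and>
        (\<forall>i<length xs. \<forall>j<length xs.
           ({xs ! i, xs ! j} \<in> E \<longleftrightarrow>
              (j = Suc i mod length xs \<or> i = Suc j mod length xs))))"

definition holes :: "'a set \<Rightarrow> 'a set set \<Rightarrow> 'a set set" where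
  "holes V E = {C. is_hole V E C}"

definition holes_at :: "'a set \<Rightarrow> 'a set set \<Rightarrow> 'a \<Rightarrow> 'a set set" where
  "holes_at V E u = {H \<in> holes V E. u \<in> H}"

text \<open>Edges lying on a hole (for an induced cycle: the edges of G inside its vertex set).\<close>
definition hole_edges :: "'a set set \<Rightarrow> 'a set \<Rightarrow> 'a set set" where
  "hole_edges E H = {e \<in> E. e \<subseteq> H}"

definition NC_property :: "'a set \<Rightarrow> 'a set set \<Rightarrow> 'a \<Rightarrow> bool" where
  "NC_property V E u \<longleftrightarrow>
     \<not> (\<exists>H \<in> holes_at V E u. \<exists>H' \<in> holes V E - holes_at V E u.
          \<exists>a b c. a \<noteq> c \<and>
            {a, b} \<in> hole_edges E H \<and> {a, b} \<in> hole_edges E H' \<and>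
            {b, c} \<in> hole_edges E H \<and> {b, c} \<in> hole_edges E H')"

definition local_chordalize :: "'a set \<Rightarrow> 'a set set \<Rightarrow> 'a \<Rightarrow> 'a set set" where
  "local_chordalize V E u =
     E \<union> {{u, w} | w. w \<noteq> u \<and> (\<exists>H \<in> holes_at V E u. w \<in> H)}"

end

theory Submission
  imports Defs
begin


definition walk :: "'a set set \<Rightarrow> 'a list \<Rightarrow> bool" where
  "walk E ps \<longleftrightarrow> (\<forall>i. Suc i < length ps \<longrightarrow> {ps!i, ps!Suc i} \<in> E)"

definition ipath :: "'a set set \<Rightarrow> 'a list \<Rightarrow> bool" where
  "ipath E ps \<longleftrightarrow> distinct ps \<and>
     (\<forall>i<length ps. \<forall>j<length ps. {ps!i, ps!j} \<in> E \<longleftrightarrow> (j = Suc i \<or> i = Suc j))"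

definition hl :: "'a set set \<Rightarrow> 'a list \<Rightarrow> bool" where
  "hl E xs \<longleftrightarrow> distinct xs \<and> 4 \<le> length xs \<and>
     (\<forall>i<length xs. \<forall>j<length xs. {xs!i, xs!j} \<in> E \<longleftrightarrow>
        (j = Suc i mod length xs \<or> i = Suc j mod length xs))"

lemma is_hole_hl: "is_hole V E C \<longleftrightarrow> C \<subseteq> V \<and> (\<exists>xs. hl E xs \<and> set xs = C)"
  unfolding is_hole_def hl_def by auto

lemma graph_irr: "graph V E \<Longrightarrow> {x,x} \<notin> E"
  unfolding graph_def by (auto simp: doubleton_eq_iff)

lemma graph_V: "graph V E \<Longrightarrow> {x,y} \<in> E \<Longrightarrow> x \<in> V \<and> y \<in> V"
  unfolding graph_def by (fastforce simp: doubleton_eq_iff)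

lemma walk_Nil[simp]: "walk E []" and walk_single[simp]: "walk E [x]"
  by (auto simp: walk_def)

lemma walk_take: "walk E xs \<Longrightarrow> walk E (take k xs)"
  by (auto simp: walk_def)

lemma walk_drop: "walk E xs \<Longrightarrow> walk E (drop k xs)"
  unfolding walk_def
proof (intro allI impI)
  fix i assume w: "\<forall>i. Suc i < length xs \<longrightarrow> {xs ! i, xs ! Suc i} \<in> E" and i: "Suc i < length (drop k xs)"
  have "{xs ! (k+i), xs ! Suc (k+i)} \<in> E" using w i by auto
  thus "{drop k xs ! i, drop k xs ! Suc i} \<in> E" using i by simp
qed

lemma walk_rev: "walk E xs \<Longrightarrow> walk E (rev xs)"
  unfolding walk_def
proof (intro allI impI)
  fix i assume w: "\<forall>i. Suc i < length xs \<longrightarrow> {xs ! i, xs ! Suc i} \<in> E" and i: "Suc i < length (rev xs)"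
  have "{xs ! (length xs - Suc (Suc i)), xs ! Suc (length xs - Suc (Suc i))} \<in> E"
    using w i by auto
  moreover have "Suc (length xs - Suc (Suc i)) = length xs - Suc i" using i by auto
  ultimately show "{rev xs ! i, rev xs ! Suc i} \<in> E" using i
    by (simp add: rev_nth insert_commute)
qed

lemma walk_append: "walk E xs \<Longrightarrow> walk E ys \<Longrightarrow> (xs \<noteq> [] \<Longrightarrow> ys \<noteq> [] \<Longrightarrow> {last xs, hd ys} \<in> E)
   \<Longrightarrow> walk E (xs @ ys)"
  unfolding walk_def
proof (intro allI impI)
  fix i assume wx: "\<forall>i. Suc i < length xs \<longrightarrow> {xs ! i, xs ! Suc i} \<in> E"
    and wy: "\<forall>i. Suc i < length ys \<longrightarrow> {ys ! i, ys ! Suc i} \<in> E"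
    and j: "(xs \<noteq> [] \<Longrightarrow> ys \<noteq> [] \<Longrightarrow> {last xs, hd ys} \<in> E)"
    and i: "Suc i < length (xs @ ys)"
  show "{(xs @ ys) ! i, (xs @ ys) ! Suc i} \<in> E"
  proof (cases "Suc i < length xs")
    case True thus ?thesis using wx by (simp add: nth_append)
  next
    case False
    show ?thesis
    proof (cases "Suc i = length xs")
      case True
      hence "xs \<noteq> []" "ys \<noteq> []" using i by auto
      have "i = length xs - 1" using True by simp
      with j True \<open>xs \<noteq> []\<close> \<open>ys \<noteq> []\<close> show ?thesis by (simp add: nth_append last_conv_nth hd_conv_nth)
    next
      case False2: False
      hence "i \<ge> length xs" using False by auto
      then obtain k where k: "i = length xs + k" by (metis le_add_diff_inverse)
      thus ?thesis using wy i by (simp add: nth_append)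
    qed
  qed
qed

lemma walk_Cons: "walk E (x # xs) \<longleftrightarrow> walk E xs \<and> (xs \<noteq> [] \<longrightarrow> {x, hd xs} \<in> E)"
  unfolding walk_def
  apply (cases xs) apply simp
  apply (auto simp: nth_Cons split: nat.splits)
  done

lemma ipath_walk: "ipath E ps \<Longrightarrow> walk E ps"
  by (auto simp: ipath_def walk_def)

lemma ipath_adj: "ipath E ps \<Longrightarrow> i < length ps \<Longrightarrow> j < length ps \<Longrightarrow>
   {ps!i, ps!j} \<in> E \<longleftrightarrow> (j = Suc i \<or> i = Suc j)"
  by (auto simp: ipath_def)

lemma ipath_rev: "ipath E ps \<Longrightarrow> ipath E (rev ps)"
  unfolding ipath_def
  apply (auto simp: rev_nth)
  done



lemma ipath_take: "ipath E ps \<Longrightarrow> ipath E (take k ps)"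
  unfolding ipath_def by auto

lemma ipath_drop: "ipath E ps \<Longrightarrow> ipath E (drop k ps)"
  unfolding ipath_def
proof (intro conjI allI impI)
  assume a: "distinct ps \<and> (\<forall>i<length ps. \<forall>j<length ps. ({ps ! i, ps ! j} \<in> E) = (j = Suc i \<or> i = Suc j))"
  thus "distinct (drop k ps)" by simp
  fix i j assume i: "i < length (drop k ps)" and j: "j < length (drop k ps)"
  have "({ps ! (k+i), ps ! (k+j)} \<in> E) = (k+j = Suc (k+i) \<or> k+i = Suc (k+j))" using a i j by auto
  thus "({drop k ps ! i, drop k ps ! j} \<in> E) = (j = Suc i \<or> i = Suc j)" using i j by simp
qed

lemma distinct_last_iff: "distinct xs \<Longrightarrow> i < length xs \<Longrightarrow> xs!i = last xs \<longleftrightarrow> i = length xs - 1"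
proof -
  assume d: "distinct xs" and i: "i < length xs"
  hence ne: "xs \<noteq> []" by auto
  show ?thesis using d i ne by (simp add: last_conv_nth nth_eq_iff_index_eq)
qed

lemma distinct_hd_iff: "distinct xs \<Longrightarrow> i < length xs \<Longrightarrow> xs!i = hd xs \<longleftrightarrow> i = 0"
proof -
  assume d: "distinct xs" and i: "i < length xs"
  hence ne: "xs \<noteq> []" by auto
  show ?thesis using d i ne by (simp add: hd_conv_nth nth_eq_iff_index_eq)
qed


lemma hl_two:
  assumes p1: "ipath E P1" and p2: "ipath E P2" and ne: "P1 \<noteq> []" "P2 \<noteq> []"
    and dj: "set P1 \<inter> set P2 = {}" and len: "4 \<le> length P1 + length P2"
    and cr: "\<And>x y. x \<in> set P1 \<Longrightarrow> y \<in> set P2 \<Longrightarrow>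
       ({x,y} \<in> E \<longleftrightarrow> (x = last P1 \<and> y = hd P2) \<or> (x = hd P1 \<and> y = last P2))"
  shows "hl E (P1 @ P2)"
proof -
  define n1 where "n1 = length P1"
  define n2 where "n2 = length P2"
  have d1: "distinct P1" and d2: "distinct P2" using p1 p2 by (auto simp: ipath_def)
  have n1: "n1 \<ge> 1" and n2: "n2 \<ge> 1" using ne by (auto simp: n1_def n2_def Suc_le_eq)
  have cross: "{P1!i, P2!k} \<in> E \<longleftrightarrow> (i = n1 - 1 \<and> k = 0) \<or> (i = 0 \<and> k = n2 - 1)"
    if "i < n1" "k < n2" for i k
    using cr[of "P1!i" "P2!k"] that distinct_last_iff[OF d1, of i] distinct_last_iff[OF d2, of k]
      distinct_hd_iff[OF d1, of i] distinct_hd_iff[OF d2, of k]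
    by (auto simp: n1_def n2_def)
  have L: "length (P1 @ P2) = n1 + n2" by (simp add: n1_def n2_def)
  show ?thesis unfolding hl_def L
  proof (intro conjI allI impI)
    show "distinct (P1 @ P2)" using d1 d2 dj by simp
    show "4 \<le> n1 + n2" using len by (simp add: n1_def n2_def)
  next
    fix i j assume i: "i < n1 + n2" and j: "j < n1 + n2"
    show "{(P1 @ P2) ! i, (P1 @ P2) ! j} \<in> E \<longleftrightarrow>
          (j = Suc i mod (n1 + n2) \<or> i = Suc j mod (n1 + n2))"
    proof (cases "i < n1")
      case True
      note iT = True
      show ?thesis
      proof (cases "j < n1")
        case True
        have "{(P1 @ P2) ! i, (P1 @ P2) ! j} \<in> E \<longleftrightarrow> (j = Suc i \<or> i = Suc j)"
          using ipath_adj[OF p1, of i j] iT True by (simp add: nth_append n1_def)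
        moreover have "Suc i mod (n1+n2) = Suc i" "Suc j mod (n1+n2) = Suc j"
          using iT True n2 by auto
        ultimately show ?thesis by simp
      next
        case False
        have e: "(P1 @ P2) ! j = P2 ! (j - n1)" using False by (simp add: nth_append n1_def)
        have "{(P1 @ P2) ! i, (P1 @ P2) ! j} \<in> E \<longleftrightarrow>
           (i = n1 - 1 \<and> j - n1 = 0) \<or> (i = 0 \<and> j - n1 = n2 - 1)"
          using cross[of i "j - n1"] iT False j e by (simp add: nth_append n1_def)
        moreover have "Suc i mod (n1+n2) = Suc i" using iT n2 by auto
        moreover have "Suc j mod (n1+n2) = (if Suc j = n1 + n2 then 0 else Suc j)"
          using j by auto
        ultimately show ?thesis using iT False j n1 n2 by auto
      qed
    next
      case False
      note iF = False
      show ?thesis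
      proof (cases "j < n1")
        case True
        have e: "(P1 @ P2) ! i = P2 ! (i - n1)" using iF by (simp add: nth_append n1_def)
        have "{(P1 @ P2) ! i, (P1 @ P2) ! j} \<in> E \<longleftrightarrow>
           (j = n1 - 1 \<and> i - n1 = 0) \<or> (j = 0 \<and> i - n1 = n2 - 1)"
          using cross[of j "i - n1"] iF True i e by (simp add: nth_append n1_def insert_commute)
        moreover have "Suc j mod (n1+n2) = Suc j" using True n2 by auto
        moreover have "Suc i mod (n1+n2) = (if Suc i = n1 + n2 then 0 else Suc i)"
          using i by auto
        ultimately show ?thesis using iF True i n1 n2 by auto
      next
        case False
        have "{(P1 @ P2) ! i, (P1 @ P2) ! j} \<in> E \<longleftrightarrow> (j - n1 = Suc (i - n1) \<or> i - n1 = Suc (j - n1))"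
          using ipath_adj[OF p2, of "i - n1" "j - n1"] iF False i j
          by (simp add: nth_append n1_def n2_def)
        moreover have "Suc i mod (n1+n2) = (if Suc i = n1 + n2 then 0 else Suc i)"
          "Suc j mod (n1+n2) = (if Suc j = n1 + n2 then 0 else Suc j)"
          using i j by auto
        ultimately show ?thesis using iF False i j n1 n2 by auto
      qed
    qed
  qed
qed



lemma hl_rotate1: assumes h: "hl E xs" shows "hl E (rotate1 xs)"
proof -
  define n where "n = length xs"
  have n4: "n \<ge> 4" using h by (simp add: hl_def n_def)
  have A: "\<forall>i<n. \<forall>j<n. {xs!i, xs!j} \<in> E \<longleftrightarrow> (j = Suc i mod n \<or> i = Suc j mod n)"
    using h by (simp add: hl_def n_def)
  show ?thesis unfolding hl_def length_rotate1 n_def[symmetric]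
  proof (intro conjI allI impI)
    show "distinct (rotate1 xs)" using h by (simp add: hl_def)
    show "4 \<le> n" by fact
  next
    fix i j assume i: "i < n" and j: "j < n"
    have r: "rotate1 xs ! i = xs ! (Suc i mod n)" "rotate1 xs ! j = xs ! (Suc j mod n)"
      using i j by (simp_all add: nth_rotate1 n_def)
    have i': "Suc i mod n < n" and j': "Suc j mod n < n" using n4 by auto
    have e: "{xs ! (Suc i mod n), xs ! (Suc j mod n)} \<in> E \<longleftrightarrow>
      (Suc j mod n = Suc (Suc i mod n) mod n \<or> Suc i mod n = Suc (Suc j mod n) mod n)"
      using A i' j' by blast
    have c: "\<And>k. k < n \<Longrightarrow> Suc k mod n = (if Suc k = n then 0 else Suc k)" by auto
    have "(Suc j mod n = Suc (Suc i mod n) mod n \<or> Suc i mod n = Suc (Suc j mod n) mod n)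
        \<longleftrightarrow> (j = Suc i mod n \<or> i = Suc j mod n)"
      using i j n4 by (simp add: c)
    thus "{rotate1 xs ! i, rotate1 xs ! j} \<in> E \<longleftrightarrow> (j = Suc i mod n \<or> i = Suc j mod n)"
      using e r by simp
  qed
qed

lemma hl_rotate: "hl E xs \<Longrightarrow> hl E (rotate k xs)"
  by (induction k) (auto intro: hl_rotate1)

definition apex :: "'a set set \<Rightarrow> 'a \<Rightarrow> 'a list \<Rightarrow> bool" where
  "apex E u rs \<longleftrightarrow> ipath E rs \<and> 3 \<le> length rs \<and> u \<notin> set rs \<and> {u, hd rs} \<in> E \<and> {u, last rs} \<in> E
     \<and> (\<forall>i. 0 < i \<longrightarrow> i < length rs - 1 \<longrightarrow> {u, rs!i} \<notin> E)"

lemma hl_Cons_apex: assumes h: "hl E (u # rs)" shows "apex E u rs"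
proof -
  define m where "m = length rs"
  have m3: "m \<ge> 3" using h by (simp add: hl_def m_def)
  have A: "\<forall>i<Suc m. \<forall>j<Suc m. {(u#rs)!i, (u#rs)!j} \<in> E \<longleftrightarrow> (j = Suc i mod Suc m \<or> i = Suc j mod Suc m)"
    using h by (simp add: hl_def m_def)
  have c: "\<And>k. k < Suc m \<Longrightarrow> Suc k mod Suc m = (if Suc k = Suc m then 0 else Suc k)" by auto
  have ip: "ipath E rs" unfolding ipath_def m_def[symmetric]
  proof (intro conjI allI impI)
    show "distinct rs" using h by (simp add: hl_def)
    fix i j assume i: "i < m" and j: "j < m"
    have "{(u#rs)!Suc i, (u#rs)!Suc j} \<in> E \<longleftrightarrow> (Suc j = Suc (Suc i) mod Suc m \<or> Suc i = Suc (Suc j) mod Suc m)"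
      using A i j by blast
    thus "{rs ! i, rs ! j} \<in> E \<longleftrightarrow> (j = Suc i \<or> i = Suc j)" using i j by (auto simp: c split: if_splits)
  qed
  have U: "{u, rs!i} \<in> E \<longleftrightarrow> (i = 0 \<or> i = m - 1)" if i: "i < m" for i
  proof -
    have "{(u#rs)!0, (u#rs)!Suc i} \<in> E \<longleftrightarrow> (Suc i = Suc 0 mod Suc m \<or> 0 = Suc (Suc i) mod Suc m)"
      using A i by blast
    thus ?thesis using i m3 by (auto simp: c)
  qed
  have ne: "rs \<noteq> []" using m3 m_def by auto
  show ?thesis unfolding apex_def
  proof (intro conjI allI impI)
    show "ipath E rs" by fact
    show "3 \<le> length rs" using m3 m_def by simp
    show "u \<notin> set rs" using h by (simp add: hl_def)
    show "{u, hd rs} \<in> E" using U[of 0] ne m3 by (simp add: hd_conv_nth m_def)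
    show "{u, last rs} \<in> E" using U[of "m-1"] ne m3 by (simp add: last_conv_nth m_def)
    fix i assume "0 < i" "i < length rs - 1" thus "{u, rs ! i} \<notin> E" using U[of i] m_def by auto
  qed
qed

lemma apex_hl: assumes a: "apex E u rs" and irr: "{u,u} \<notin> E" shows "hl E (u # rs)"
proof -
  have ip: "ipath E rs" and l3: "3 \<le> length rs" and un: "u \<notin> set rs" and h: "{u, hd rs} \<in> E"
    and l: "{u, last rs} \<in> E" and mid: "\<And>i. 0 < i \<Longrightarrow> i < length rs - 1 \<Longrightarrow> {u, rs!i} \<notin> E"
    using a by (auto simp: apex_def)
  have d: "distinct rs" using ip by (simp add: ipath_def)
  have "hl E ([u] @ rs)"
  proof (rule hl_two)
    show "ipath E [u]" using irr by (simp add: ipath_def)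
    show "ipath E rs" by fact
    show "[u] \<noteq> []" "rs \<noteq> []" using l3 by auto
    show "set [u] \<inter> set rs = {}" using un by auto
    show "4 \<le> length [u] + length rs" using l3 by simp
    fix x y assume x: "x \<in> set [u]" and y: "y \<in> set rs"
    then obtain i where i: "i < length rs" "y = rs!i" by (auto simp: in_set_conv_nth)
    show "{x, y} \<in> E \<longleftrightarrow> (x = last [u] \<and> y = hd rs \<or> x = hd [u] \<and> y = last rs)"
    proof (cases "i = 0 \<or> i = length rs - 1")
      case True
      hence "y = hd rs \<or> y = last rs"
      proof
        assume "i = 0" thus ?thesis using i l3 by (auto simp: hd_conv_nth)
      next
        assume "i = length rs - 1"
        moreover have "rs \<noteq> []" using l3 by auto
        ultimately show ?thesis using i by (simp add: last_conv_nth)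
      qed
      moreover have "x = u" using x by simp
      ultimately show ?thesis using h l by auto
    next
      case False
      hence "y \<noteq> hd rs" "y \<noteq> last rs" using i distinct_hd_iff[OF d, of i] distinct_last_iff[OF d, of i] by auto
      moreover have "0 < i" "i < length rs - 1" using False i by auto
      ultimately show ?thesis using mid[of i] x i(2) by auto
    qed
  qed
  thus ?thesis by simp
qed

lemma apex_hole: "graph V E \<Longrightarrow> apex E u rs \<Longrightarrow> u \<in> V \<Longrightarrow> set rs \<subseteq> V \<Longrightarrow> insert u (set rs) \<in> holes_at V E u"
proof -
  assume g: "graph V E" and a: "apex E u rs" and "u \<in> V" "set rs \<subseteq> V"
  have "hl E (u # rs)" using apex_hl[OF a] graph_irr[OF g] by blast
  thus ?thesis using \<open>u \<in> V\<close> \<open>set rs \<subseteq> V\<close> by (auto simp: holes_at_def holes_def is_hole_hl intro!: exI[of _ "u # rs"])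
qed

lemma hl_apex: assumes h: "hl E xs" and u: "u \<in> set xs"
  shows "\<exists>rs. apex E u rs \<and> set rs = set xs - {u}"
proof -
  obtain k where k: "k < length xs" "xs ! k = u" using u by (auto simp: in_set_conv_nth)
  define ys where "ys = rotate k xs"
  have hy: "hl E ys" using h by (simp add: ys_def hl_rotate)
  have ne: "ys \<noteq> []" using hy by (auto simp: hl_def)
  have "ys ! 0 = xs ! ((k + 0) mod length xs)" unfolding ys_def using k by (intro nth_rotate) auto
  hence "ys ! 0 = u" using k by simp
  hence ys: "ys = u # tl ys" using ne by (metis hd_Cons_tl hd_conv_nth)
  have "apex E u (tl ys)" using hy ys by (metis hl_Cons_apex)
  moreover have "set (tl ys) = set xs - {u}"
  proof -
    have "distinct ys" using hy by (simp add: hl_def)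
    hence "u \<notin> set (tl ys)" using ys by (metis distinct.simps(2))
    moreover have "set ys = set xs" by (simp add: ys_def)
    ultimately show ?thesis using ys by (metis Diff_insert_absorb list.simps(15))
  qed
  ultimately show ?thesis by blast
qed

lemma apex_rev: assumes a: "apex E u rs" shows "apex E u (rev rs)"
proof -
  have ip: "ipath E rs" and l3: "3 \<le> length rs" and mid: "\<And>i. 0 < i \<Longrightarrow> i < length rs - 1 \<Longrightarrow> {u, rs!i} \<notin> E"
    using a by (auto simp: apex_def)
  show ?thesis unfolding apex_def
  proof (intro conjI allI impI)
    show "ipath E (rev rs)" using ip by (rule ipath_rev)
    fix i assume "0 < i" "i < length (rev rs) - 1"
    thus "{u, rev rs ! i} \<notin> E" using mid[of "length rs - 1 - i"] by (simp add: rev_nth)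
  qed (use a l3 in \<open>auto simp: apex_def hd_rev last_rev\<close>)
qed



lemma short_path:
  assumes g: "graph V E" and w: "walk E ws" and ne: "ws \<noteq> []"
  shows "\<exists>ps. ipath E ps \<and> ps \<noteq> [] \<and> hd ps = hd ws \<and> last ps = last ws \<and> set ps \<subseteq> set ws"
proof -
  define P where "P ps \<longleftrightarrow> walk E ps \<and> ps \<noteq> [] \<and> hd ps = hd ws \<and> last ps = last ws \<and> set ps \<subseteq> set ws" for ps
  have "P ws" using w ne by (simp add: P_def)
  then obtain ps where ps: "P ps" and min: "\<And>qs. P qs \<Longrightarrow> length ps \<le> length qs"
    using ex_has_least_nat[of P ws length] by blast
  have wp: "walk E ps" and nep: "ps \<noteq> []" and hp: "hd ps = hd ws" and lp: "last ps = last ws"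
    and sp: "set ps \<subseteq> set ws" using ps by (auto simp: P_def)
  have edge: "\<And>k. Suc k < length ps \<Longrightarrow> {ps!k, ps!Suc k} \<in> E" using wp by (simp add: walk_def)
  have lt: "last (take (Suc i) ps) = ps!i" if "i < length ps" for i
  proof -
    have "take (Suc i) ps \<noteq> []" using that by (cases ps) auto
    hence "last (take (Suc i) ps) = take (Suc i) ps ! (length (take (Suc i) ps) - 1)" by (rule last_conv_nth)
    moreover have "length (take (Suc i) ps) = Suc i" using that by simp
    ultimately show ?thesis by simp
  qed
  have hdt: "hd (take (Suc i) ps) = hd ps" for i using nep by (cases ps) auto
  have eqF: False if ij: "i < j" "j < length ps" and e: "ps!i = ps!j" for i j
  proof -
    define qs where "qs = take (Suc i) ps @ drop (Suc j) ps"
    have "P qs" unfolding P_def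
    proof (intro conjI)
      show "walk E qs" unfolding qs_def
      proof (rule walk_append[OF walk_take[OF wp] walk_drop[OF wp]])
        assume "drop (Suc j) ps \<noteq> []"
        hence "Suc j < length ps" by simp
        thus "{last (take (Suc i) ps), hd (drop (Suc j) ps)} \<in> E"
          using lt[of i] ij e edge[of j] by (simp add: hd_drop_conv_nth)
      qed
      show "qs \<noteq> []" by (simp add: qs_def nep)
      show "hd qs = hd ws" using hp hdt nep by (simp add: qs_def)
      show "last qs = last ws"
      proof (cases "Suc j < length ps")
        case True thus ?thesis by (simp add: qs_def last_drop lp)
      next
        case False
        hence "j = length ps - 1" using ij by simp
        hence "ps!j = last ps" using nep by (simp add: last_conv_nth)
        thus ?thesis using False lt[of i] ij e lp by (simp add: qs_def)
      qed
      show "set qs \<subseteq> set ws" using sp by (auto simp: qs_def dest: in_set_takeD in_set_dropD)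
    qed
    moreover have "length qs < length ps" using ij by (simp add: qs_def)
    ultimately show False using min by fastforce
  qed
  have adjF: False if ij: "Suc i < j" "j < length ps" and e: "{ps!i, ps!j} \<in> E" for i j
  proof -
    define qs where "qs = take (Suc i) ps @ drop j ps"
    have "P qs" unfolding P_def
    proof (intro conjI)
      show "walk E qs" unfolding qs_def
      proof (rule walk_append[OF walk_take[OF wp] walk_drop[OF wp]])
        show "{last (take (Suc i) ps), hd (drop j ps)} \<in> E"
          using lt[of i] ij e by (simp add: hd_drop_conv_nth)
      qed
      show "qs \<noteq> []" by (simp add: qs_def nep)
      show "hd qs = hd ws" using hp hdt nep by (simp add: qs_def)
      show "last qs = last ws" using ij by (simp add: qs_def last_drop lp)
      show "set qs \<subseteq> set ws" using sp by (auto simp: qs_def dest: in_set_takeD in_set_dropD)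
    qed
    moreover have "length qs < length ps" using ij by (simp add: qs_def)
    ultimately show False using min by fastforce
  qed
  have "ipath E ps" unfolding ipath_def
  proof (intro conjI allI impI)
    show "distinct ps" unfolding distinct_conv_nth
    proof (intro allI impI)
      fix i j assume "i < length ps" "j < length ps" "i \<noteq> j"
      thus "ps ! i \<noteq> ps ! j" using eqF[of i j] eqF[of j i] by (metis linorder_neqE_nat)
    qed
    fix i j assume i: "i < length ps" and j: "j < length ps"
    show "{ps ! i, ps ! j} \<in> E \<longleftrightarrow> (j = Suc i \<or> i = Suc j)"
    proof
      assume e: "{ps ! i, ps ! j} \<in> E"
      have "i \<noteq> j" using e graph_irr[OF g] by auto
      moreover have "\<not> Suc i < j" using adjF[of i j] e j by blast
      moreover have "{ps ! j, ps ! i} \<in> E" using e by (simp add: insert_commute)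
      hence "\<not> Suc j < i" using adjF[of j i] i by blast
      ultimately show "j = Suc i \<or> i = Suc j" by linarith
    next
      assume "j = Suc i \<or> i = Suc j"
      thus "{ps ! i, ps ! j} \<in> E" using edge i j by (auto simp: insert_commute)
    qed
  qed
  thus ?thesis using nep hp lp sp by blast
qed

lemma crossing:
  assumes g: "graph V E" and u: "u \<in> V" and w: "walk E ws" "ws \<noteq> []" "set ws \<subseteq> V"
    and A: "hd ws \<in> A" and B: "last ws \<in> B" and AB: "A \<inter> B = {}"
    and noE: "\<And>x y. x \<in> A \<Longrightarrow> y \<in> B \<Longrightarrow> {x,y} \<notin> E"
    and uh: "{u, hd ws} \<in> E" and ul: "{u, last ws} \<in> E" and nu: "u \<notin> set ws"
    and only: "\<And>v. v \<in> set ws \<Longrightarrow> {u,v} \<in> E \<Longrightarrow> v = hd ws \<or> v = last ws"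
  shows "\<exists>x\<in>set ws. x \<notin> A \<and> x \<notin> B \<and> (\<exists>H \<in> holes_at V E u. x \<in> H)"
proof -
  obtain ps where ip: "ipath E ps" and nep: "ps \<noteq> []" and hp: "hd ps = hd ws" and lp: "last ps = last ws"
    and sp: "set ps \<subseteq> set ws" using short_path[OF g w(1,2)] by blast
  define n where "n = length ps"
  have d: "distinct ps" using ip by (simp add: ipath_def)
  have hl_ne: "hd ps \<noteq> last ps" using A B AB hp lp by auto
  have n2: "n \<ge> 2"
  proof (rule ccontr)
    assume "\<not> n \<ge> 2"
    hence "n = 1" using nep n_def by (cases ps) (auto simp: Suc_le_eq)
    thus False using hl_ne nep n_def by (cases ps) auto
  qed
  have hd0: "hd ps = ps!0" and lst: "last ps = ps!(n-1)" using nep by (auto simp: hd_conv_nth last_conv_nth n_def)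
  have n3: "n \<ge> 3"
  proof (rule ccontr)
    assume "\<not> n \<ge> 3"
    hence "n = 2" using n2 by simp
    hence "{ps!0, ps!(n-1)} \<in> E" using ipath_adj[OF ip, of 0 "n-1"] n_def by simp
    thus False using noE[of "hd ps" "last ps"] A B hp lp hd0 lst by simp
  qed
  have ap: "apex E u ps" unfolding apex_def
  proof (intro conjI allI impI)
    show "ipath E ps" by fact
    show "3 \<le> length ps" using n3 n_def by simp
    show "u \<notin> set ps" using nu sp by auto
    show "{u, hd ps} \<in> E" using uh hp by simp
    show "{u, last ps} \<in> E" using ul lp by simp
    fix i assume i: "0 < i" "i < length ps - 1"
    have "ps!i \<noteq> hd ps" "ps!i \<noteq> last ps"
      using i distinct_hd_iff[OF d, of i] distinct_last_iff[OF d, of i] by auto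
    moreover have "ps!i \<in> set ws" using sp i by auto
    ultimately show "{u, ps ! i} \<notin> E" using only[of "ps!i"] hp lp by auto
  qed
  have H: "insert u (set ps) \<in> holes_at V E u"
    using apex_hole[OF g ap u] sp w(3) by auto
  define k where "k = (LEAST k. k < n \<and> ps!k \<notin> A)"
  have ex: "n - 1 < n \<and> ps!(n-1) \<notin> A" using n2 B AB lp lst by auto
  have k: "k < n \<and> ps!k \<notin> A" unfolding k_def by (rule LeastI[where P="\<lambda>k. k < n \<and> ps!k \<notin> A", OF ex])
  have k0: "k \<noteq> 0"
  proof
    assume "k = 0" hence "ps!k \<in> A" using A hp hd0 by simp
    thus False using k by simp
  qed
  have "ps!(k-1) \<in> A"
  proof -
    have "k - 1 < (LEAST k. k < n \<and> ps!k \<notin> A)" using k0 k_def by simp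
    hence "\<not> (k - 1 < n \<and> ps!(k-1) \<notin> A)" by (rule not_less_Least)
    thus ?thesis using k by auto
  qed
  moreover have "{ps!(k-1), ps!k} \<in> E" using ipath_adj[OF ip, of "k-1" k] k k0 n_def by auto
  ultimately have "ps!k \<notin> B" using noE by blast
  moreover have "ps!k \<in> set ws" using sp k n_def by auto
  moreover have "ps!k \<in> insert u (set ps)" using k n_def by auto
  ultimately show ?thesis using k H by blast
qed



definition Wset :: "'a set \<Rightarrow> 'a set set \<Rightarrow> 'a \<Rightarrow> 'a set" where
  "Wset V E u = {w. w \<noteq> u \<and> (\<exists>H\<in>holes_at V E u. w \<in> H)}"

lemma cr2:
  assumes g: "graph V E" and u: "u \<in> V"
    and Rp: "Rp \<noteq> []" "walk E Rp" "set Rp \<subseteq> V"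
    and xl: "xl \<noteq> []" "walk E xl" "set xl \<subseteq> V" "\<forall>x\<in>set xl. x \<notin> Wset V E u \<and> {u,x} \<notin> E \<and> x \<noteq> u"
    and ts: "ts \<noteq> []" "walk E ts" "set ts \<subseteq> V"
    and j1: "{last Rp, hd xl} \<in> E" and j2: "{last xl, hd ts} \<in> E"
    and uh: "{u, hd Rp} \<in> E" and ul: "{u, last ts} \<in> E"
    and dj: "set Rp \<inter> set ts = {}" and noE: "\<And>x y. x \<in> set Rp \<Longrightarrow> y \<in> set ts \<Longrightarrow> {x,y} \<notin> E"
    and nu: "u \<notin> set Rp" "u \<notin> set ts"
    and only: "\<And>v. v \<in> set Rp \<union> set ts \<Longrightarrow> {u,v} \<in> E \<Longrightarrow> v = hd Rp \<or> v = last ts"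
  shows False
proof -
  define ws where "ws = Rp @ xl @ ts"
  have w1: "walk E (xl @ ts)" using xl ts j2 by (intro walk_append) auto
  have w: "walk E ws" unfolding ws_def using Rp w1 j1 xl by (intro walk_append[of E Rp "xl @ ts"]) auto
  have hw: "hd ws = hd Rp" using Rp by (simp add: ws_def)
  have lw: "last ws = last ts" using ts by (simp add: ws_def)
  obtain x where x: "x \<in> set ws" "x \<notin> set Rp" "x \<notin> set ts" "\<exists>H\<in>holes_at V E u. x \<in> H"
  proof (rule crossing[OF g u w, of "set Rp" "set ts", THEN bexE])
    show "ws \<noteq> []" "set ws \<subseteq> V" using Rp xl ts by (auto simp: ws_def)
    show "hd ws \<in> set Rp" using hw Rp by simp
    show "last ws \<in> set ts" using lw ts by simp
    show "set Rp \<inter> set ts = {}" by fact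
    show "\<And>x y. x \<in> set Rp \<Longrightarrow> y \<in> set ts \<Longrightarrow> {x,y} \<notin> E" by fact
    show "{u, hd ws} \<in> E" using uh hw by simp
    show "{u, last ws} \<in> E" using ul lw by simp
    show "u \<notin> set ws" using nu xl by (auto simp: ws_def)
    show "\<And>v. v \<in> set ws \<Longrightarrow> {u,v} \<in> E \<Longrightarrow> v = hd ws \<or> v = last ws"
      using only xl hw lw by (auto simp: ws_def)
  qed (auto)
  hence "x \<in> set xl" by (auto simp: ws_def)
  moreover have "x \<noteq> u" using x nu xl by (auto simp: ws_def)
  ultimately show False using x xl by (auto simp: Wset_def)
qed

lemma subwalk_le:
  assumes "k1 \<le> k2" "k2 < length ys"
  shows "drop k1 (take (Suc k2) ys) \<noteq> [] \<and> hd (drop k1 (take (Suc k2) ys)) = ys!k1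
     \<and> last (drop k1 (take (Suc k2) ys)) = ys!k2 \<and> set (drop k1 (take (Suc k2) ys)) \<subseteq> set ys"
proof -
  define sw where "sw = drop k1 (take (Suc k2) ys)"
  have len: "length sw = Suc k2 - k1" using assms by (simp add: sw_def)
  hence ne: "sw \<noteq> []" using assms by auto
  have "hd sw = sw ! 0" using ne by (simp add: hd_conv_nth)
  also have "\<dots> = ys!k1" using assms by (simp add: sw_def)
  finally have h: "hd sw = ys!k1" .
  have "last sw = sw ! (k2 - k1)" using ne len by (simp add: last_conv_nth)
  also have "\<dots> = ys!k2" using assms by (simp add: sw_def)
  finally have l: "last sw = ys!k2" .
  have "set sw \<subseteq> set ys" by (auto simp: sw_def dest: in_set_takeD in_set_dropD)
  thus ?thesis using ne h l by (simp add: sw_def)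
qed

lemma subwalk:
  assumes w: "walk E ys" and a: "a \<in> set ys" and b: "b \<in> set ys"
  shows "\<exists>sw. walk E sw \<and> sw \<noteq> [] \<and> hd sw = a \<and> last sw = b \<and> set sw \<subseteq> set ys"
proof -
  obtain k1 where k1: "k1 < length ys" "ys!k1 = a" using a by (auto simp: in_set_conv_nth)
  obtain k2 where k2: "k2 < length ys" "ys!k2 = b" using b by (auto simp: in_set_conv_nth)
  show ?thesis
  proof (cases "k1 \<le> k2")
    case True
    thus ?thesis using subwalk_le[OF True k2(1)] k1 k2 walk_drop[OF walk_take[OF w]] by blast
  next
    case False
    hence le: "k2 \<le> k1" by simp
    define sw where "sw = drop k2 (take (Suc k1) ys)"
    have P: "sw \<noteq> [] \<and> hd sw = ys!k2 \<and> last sw = ys!k1 \<and> set sw \<subseteq> set ys"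
      using subwalk_le[OF le k1(1)] by (simp add: sw_def)
    have "walk E (rev sw)" unfolding sw_def by (intro walk_rev walk_drop walk_take w)
    moreover have "rev sw \<noteq> []" "hd (rev sw) = a" "last (rev sw) = b" "set (rev sw) \<subseteq> set ys"
      using P k1 k2 by (auto simp: hd_rev last_rev)
    ultimately show ?thesis by blast
  qed
qed

lemma ipath_len3: "ipath E Q \<Longrightarrow> Q \<noteq> [] \<Longrightarrow> hd Q \<noteq> last Q \<Longrightarrow> {hd Q, last Q} \<notin> E \<Longrightarrow> 3 \<le> length Q"
proof (rule ccontr)
  assume ip: "ipath E Q" and ne: "Q \<noteq> []" and hl: "hd Q \<noteq> last Q" and nE: "{hd Q, last Q} \<notin> E"
    and c: "\<not> 3 \<le> length Q"
  have "length Q \<noteq> 1" using hl ne by (cases Q) auto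
  moreover have "length Q \<noteq> 0" using ne by simp
  ultimately have "length Q = 2" using c by linarith
  hence "{Q!0, Q!1} \<in> E" using ipath_adj[OF ip, of 0 1] by simp
  moreover have "hd Q = Q!0" "last Q = Q!1" using ne \<open>length Q = 2\<close> by (auto simp: hd_conv_nth last_conv_nth)
  ultimately show False using nE by simp
qed



lemma set_drop_take: "b \<le> length xs \<Longrightarrow> set (drop a (take b xs)) = {xs!t | t. a \<le> t \<and> t < b}"
proof -
  assume b: "b \<le> length xs"
  show ?thesis
  proof
    show "set (drop a (take b xs)) \<subseteq> {xs!t | t. a \<le> t \<and> t < b}"
    proof
      fix x assume "x \<in> set (drop a (take b xs))"
      then obtain k where k: "k < length (drop a (take b xs))" "x = drop a (take b xs) ! k"
        by (auto simp: in_set_conv_nth)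
      hence "x = xs ! (a + k)" "a + k < b" using b by auto
      thus "x \<in> {xs!t | t. a \<le> t \<and> t < b}" by auto
    qed
  next
    show "{xs!t | t. a \<le> t \<and> t < b} \<subseteq> set (drop a (take b xs))"
    proof
      fix x assume "x \<in> {xs!t | t. a \<le> t \<and> t < b}"
      then obtain t where t: "a \<le> t" "t < b" "x = xs!t" by auto
      have "drop a (take b xs) ! (t - a) = xs ! t" using t b by simp
      moreover have "t - a < length (drop a (take b xs))" using t b by simp
      ultimately show "x \<in> set (drop a (take b xs))" using t by (metis nth_mem)
    qed
  qed
qed

lemma interval:
  assumes g: "graph V E" and nc: "NC_property V E u" and u: "u \<in> V"
    and ap: "apex E u rs" and rV: "set rs \<subseteq> V"
    and j: "0 < j" "j < length rs - 1"
    and ys: "walk E ys" "ys \<noteq> []" "set ys \<subseteq> V" "set ys \<inter> set rs = {}" "u \<notin> set ys"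
       "\<forall>y\<in>set ys. {y, rs!j} \<notin> E"
    and lo: "i < j" "y1 \<in> set ys" "{y1, rs!i} \<in> E"
    and hi: "j < l" "l < length rs" "y2 \<in> set ys" "{y2, rs!l} \<in> E"
  shows False
proof -
  define n where "n = length rs"
  have ip: "ipath E rs" and un: "u \<notin> set rs" using ap by (auto simp: apex_def)
  have d: "distinct rs" using ip by (simp add: ipath_def)
  define NS where "NS t \<longleftrightarrow> (\<exists>y\<in>set ys. {y, rs!t} \<in> E)" for t
  define I0 where "I0 = {t. t < j \<and> NS t}"
  define I1 where "I1 = {t. j < t \<and> t < n \<and> NS t}"
  have fI0: "finite I0" by (rule finite_subset[of _ "{..<j}"]) (auto simp: I0_def)
  have fI1: "finite I1" by (rule finite_subset[of _ "{..<n}"]) (auto simp: I1_def)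
  have iI0: "i \<in> I0" using lo by (auto simp: I0_def NS_def)
  have lI1: "l \<in> I1" using hi by (auto simp: I1_def NS_def n_def)
  define i0 where "i0 = Max I0"
  define i1 where "i1 = Min I1"
  have i0: "i0 \<in> I0" unfolding i0_def using fI0 iI0 by (intro Max_in) auto
  have i1: "i1 \<in> I1" unfolding i1_def using fI1 lI1 by (intro Min_in) auto
  have i0j: "i0 < j" "NS i0" using i0 by (auto simp: I0_def)
  have i1j: "j < i1" "i1 < n" "NS i1" using i1 by (auto simp: I1_def)
  have mid: "\<not> NS t" if t: "i0 < t" "t < i1" for t
  proof
    assume ns: "NS t"
    show False
    proof (cases "t < j")
      case True hence "t \<in> I0" using ns by (simp add: I0_def)
      hence "t \<le> i0" unfolding i0_def using fI0 by simp
      thus False using t by simp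
    next
      case False
      show False
      proof (cases "t = j")
        case True thus False using ns ys(6) by (auto simp: NS_def insert_commute)
      next
        case False
        hence "t \<in> I1" using ns \<open>\<not> t < j\<close> t i1j by (simp add: I1_def)
        hence "i1 \<le> t" unfolding i1_def using fI1 by simp
        thus False using t by simp
      qed
    qed
  qed
  obtain y1' where y1': "y1' \<in> set ys" "{y1', rs!i0} \<in> E" using i0j by (auto simp: NS_def)
  obtain y2' where y2': "y2' \<in> set ys" "{y2', rs!i1} \<in> E" using i1j by (auto simp: NS_def)
  obtain sw where sw: "walk E sw" "sw \<noteq> []" "hd sw = y1'" "last sw = y2'" "set sw \<subseteq> set ys"
    using subwalk[OF ys(1) y1'(1) y2'(1)] by blast
  define wk where "wk = rs!i0 # sw @ [rs!i1]"
  have wkw: "walk E wk" unfolding wk_def walk_Cons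
  proof
    show "walk E (sw @ [rs ! i1])" using sw y2' by (intro walk_append) (auto simp: insert_commute)
    show "sw @ [rs ! i1] \<noteq> [] \<longrightarrow> {rs ! i0, hd (sw @ [rs ! i1])} \<in> E"
      using sw y1' by (auto simp: insert_commute)
  qed
  obtain Q where Q: "ipath E Q" "Q \<noteq> []" "hd Q = rs!i0" "last Q = rs!i1" "set Q \<subseteq> set wk"
    using short_path[OF g wkw] by (auto simp: wk_def)
  have i01: "Suc i0 < i1" using i0j i1j by simp
  have r01: "rs!i0 \<noteq> rs!i1" using d i01 i1j n_def by (simp add: nth_eq_iff_index_eq)
  have r01E: "{rs!i0, rs!i1} \<notin> E" using ipath_adj[OF ip, of i0 i1] i01 i1j n_def by simp
  have Q3: "3 \<le> length Q" using ipath_len3[OF Q(1,2)] Q r01 r01E by simp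
  have setQ: "\<And>y. y \<in> set Q \<Longrightarrow> y = rs!i0 \<or> y = rs!i1 \<or> y \<in> set ys"
    using Q(5) sw(5) by (auto simp: wk_def)
  define P1 where "P1 = drop (Suc i0) (take i1 rs)"
  have sP1: "set P1 = {rs!t | t. Suc i0 \<le> t \<and> t < i1}"
    unfolding P1_def using i1j n_def by (intro set_drop_take) simp
  have lP1: "length P1 = i1 - Suc i0" using i1j n_def by (simp add: P1_def)
  have P1ne: "P1 \<noteq> []" using lP1 i01 by auto
  have hP1: "hd P1 = rs!(Suc i0)" using P1ne i01 by (simp add: P1_def hd_conv_nth)
  have laP1: "last P1 = rs!(i1 - 1)"
  proof -
    have "last P1 = P1 ! (length P1 - 1)" using P1ne by (simp add: last_conv_nth)
    also have "\<dots> = rs ! (i1 - 1)"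
    proof -
      have "Suc (i1 - 2) = i1 - 1" using i01 by simp
      thus ?thesis using lP1 i01 i1j n_def by (simp add: P1_def)
    qed
    finally show ?thesis .
  qed
  have rsi: "\<And>t. t < n \<Longrightarrow> rs!t \<in> V" using rV n_def by auto
  have hl2: "hl E (P1 @ rev Q)"
  proof (rule hl_two)
    show "ipath E P1" unfolding P1_def by (intro ipath_drop ipath_take ip)
    show "ipath E (rev Q)" using Q(1) by (rule ipath_rev)
    show "P1 \<noteq> []" "rev Q \<noteq> []" using P1ne Q by auto
    show "4 \<le> length P1 + length (rev Q)" using Q3 P1ne by (cases P1) auto
    show "set P1 \<inter> set (rev Q) = {}"
    proof (rule ccontr)
      assume "set P1 \<inter> set (rev Q) \<noteq> {}"
      then obtain x where x: "x \<in> set P1" "x \<in> set Q" by auto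
      then obtain t where t: "Suc i0 \<le> t" "t < i1" "x = rs!t" using sP1 by auto
      have "t < n" using t i1j by simp
      show False using setQ[OF x(2)]
      proof (elim disjE)
        assume "x = rs!i0" thus False using t d \<open>t < n\<close> i1j n_def by (simp add: nth_eq_iff_index_eq)
      next
        assume "x = rs!i1" thus False using t d \<open>t < n\<close> i1j n_def by (simp add: nth_eq_iff_index_eq)
      next
        assume "x \<in> set ys" thus False using ys(4) t \<open>t < n\<close> n_def by auto
      qed
    qed
    fix x y assume x: "x \<in> set P1" and y: "y \<in> set (rev Q)"
    obtain t where t: "Suc i0 \<le> t" "t < i1" "x = rs!t" using sP1 x by auto
    have tn: "t < n" using t i1j by simp
    have hrq: "hd (rev Q) = rs!i1" "last (rev Q) = rs!i0" using Q by (auto simp: hd_rev last_rev)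
    have xeq1: "x = rs!(i1 - 1) \<longleftrightarrow> t = i1 - 1" using d t tn i1j n_def by (simp add: nth_eq_iff_index_eq)
    have xeq0: "x = rs!(Suc i0) \<longleftrightarrow> t = Suc i0" using d t tn i1j n_def by (simp add: nth_eq_iff_index_eq)
    have yQ: "y \<in> set Q" using y by simp
    have G: "{x, y} \<in> E \<longleftrightarrow> (t = i1 - 1 \<and> y = rs!i1 \<or> t = Suc i0 \<and> y = rs!i0)"
      using setQ[OF yQ]
    proof (elim disjE)
      assume yy: "y = rs!i0"
      have "{x,y} \<in> E \<longleftrightarrow> (i0 = Suc t \<or> t = Suc i0)" using ipath_adj[OF ip, of t i0] t tn yy n_def i1j by simp
      thus ?thesis using yy r01 t by auto
    next
      assume yy: "y = rs!i1"
      have "{x,y} \<in> E \<longleftrightarrow> (i1 = Suc t \<or> t = Suc i1)" using ipath_adj[OF ip, of t i1] t tn yy n_def i1j by simp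
      thus ?thesis using yy r01 t by auto
    next
      assume yy: "y \<in> set ys"
      have "{x,y} \<notin> E" using mid[of t] t yy by (auto simp: NS_def insert_commute)
      moreover have "y \<noteq> rs!i0" "y \<noteq> rs!i1" using yy ys(4) i1j i0j j n_def by auto
      ultimately show ?thesis by auto
    qed
    show "{x, y} \<in> E \<longleftrightarrow> (x = last P1 \<and> y = hd (rev Q) \<or> x = hd P1 \<and> y = last (rev Q))"
      unfolding G hrq laP1 hP1 xeq1 xeq0 by blast
  qed
  define H' where "H' = set (P1 @ rev Q)"
  have H'V: "H' \<subseteq> V"
  proof
    fix x assume "x \<in> H'"
    hence "x \<in> set P1 \<or> x \<in> set Q" by (auto simp: H'_def)
    thus "x \<in> V"
    proof
      assume "x \<in> set P1" thus ?thesis using sP1 rsi i1j by auto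
    next
      assume xq: "x \<in> set Q"
      have "i0 < n" using i0j i1j by simp
      thus ?thesis using setQ[OF xq] rsi[of i0] rsi[of i1] i1j ys(3) by auto
    qed
  qed
  have uH': "u \<notin> H'"
  proof
    assume "u \<in> H'"
    hence "u \<in> set P1 \<or> u \<in> set Q" by (auto simp: H'_def)
    thus False
    proof
      assume "u \<in> set P1" thus False using sP1 un i1j n_def by auto
    next
      assume "u \<in> set Q" thus False using setQ un ys(5) i1j i0j j n_def by fastforce
    qed
  qed
  have H'h: "H' \<in> holes V E - holes_at V E u"
    using hl2 H'V uH' unfolding H'_def by (auto simp: holes_def holes_at_def is_hole_hl)
  have Hh: "insert u (set rs) \<in> holes_at V E u" using apex_hole[OF g ap u rV] .
  have inH': "rs!t \<in> H'" if "i0 \<le> t" "t \<le> i1" for t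
  proof -
    have "t = i0 \<or> t = i1 \<or> (Suc i0 \<le> t \<and> t < i1)" using that by auto
    thus ?thesis
    proof (elim disjE)
      assume "t = i0" thus ?thesis using Q hd_in_set[of Q] by (auto simp: H'_def)
    next
      assume "t = i1" thus ?thesis using Q last_in_set[of Q] by (auto simp: H'_def)
    next
      assume "Suc i0 \<le> t \<and> t < i1" thus ?thesis using sP1 by (auto simp: H'_def)
    qed
  qed
  have jn: "Suc j < n" using j n_def by simp
  have e1: "{rs!(j-1), rs!j} \<in> E" using ipath_adj[OF ip, of "j-1" j] j n_def by simp
  have e2: "{rs!j, rs!(Suc j)} \<in> E" using ipath_adj[OF ip, of j "Suc j"] jn n_def by simp
  have ne: "rs!(j-1) \<noteq> rs!(Suc j)" using d jn n_def j by (simp add: nth_eq_iff_index_eq)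
  have inH: "\<And>t. t < n \<Longrightarrow> rs!t \<in> insert u (set rs)" using n_def by simp
  have "{rs!(j-1), rs!j} \<in> hole_edges E (insert u (set rs))"
       "{rs!(j-1), rs!j} \<in> hole_edges E H'"
       "{rs!j, rs!(Suc j)} \<in> hole_edges E (insert u (set rs))"
       "{rs!j, rs!(Suc j)} \<in> hole_edges E H'"
    using e1 e2 inH[of "j-1"] inH[of j] inH[of "Suc j"] jn
      inH'[of "j-1"] inH'[of j] inH'[of "Suc j"] i0j i1j
    by (auto simp: hole_edges_def)
  thus False using nc Hh H'h ne unfolding NC_property_def by blast
qed



lemma last_take_Suc: "i < length xs \<Longrightarrow> last (take (Suc i) xs) = xs!i"
proof -
  assume i: "i < length xs"
  hence "take (Suc i) xs \<noteq> []" by (cases xs) auto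
  hence "last (take (Suc i) xs) = take (Suc i) xs ! (length (take (Suc i) xs) - 1)" by (rule last_conv_nth)
  moreover have "length (take (Suc i) xs) = Suc i" using i by simp
  ultimately show ?thesis by simp
qed

lemma in_take_nth: "x \<in> set (take k xs) \<Longrightarrow> \<exists>t<k. t < length xs \<and> x = xs!t"
  by (auto simp: in_set_conv_nth)

lemma in_drop_nth: "x \<in> set (drop k xs) \<Longrightarrow> \<exists>t\<ge>k. t < length xs \<and> x = xs!t"
proof -
  assume "x \<in> set (drop k xs)"
  then obtain i where "i < length (drop k xs)" "x = drop k xs ! i" by (auto simp: in_set_conv_nth)
  thus ?thesis by (intro exI[of _ "k+i"]) auto
qed

lemma apex_facts:
  assumes ap: "apex E u rs"
  shows "ipath E rs" "distinct rs" "3 \<le> length rs" "u \<notin> set rs" "hd rs = rs!0" "last rs = rs!(length rs - 1)"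
    "\<And>t. t < length rs \<Longrightarrow> {u, rs!t} \<in> E \<longleftrightarrow> (t = 0 \<or> t = length rs - 1)"
proof -
  show ip: "ipath E rs" and l3: "3 \<le> length rs" and "u \<notin> set rs" using ap by (auto simp: apex_def)
  thus "distinct rs" by (simp add: ipath_def)
  have ne: "rs \<noteq> []" using l3 by auto
  show h: "hd rs = rs!0" using ne by (simp add: hd_conv_nth)
  show l: "last rs = rs!(length rs - 1)" using ne by (simp add: last_conv_nth)
  fix t assume t: "t < length rs"
  show "{u, rs!t} \<in> E \<longleftrightarrow> (t = 0 \<or> t = length rs - 1)"
  proof
    assume e: "{u, rs!t} \<in> E"
    show "t = 0 \<or> t = length rs - 1"
    proof (rule ccontr)
      assume "\<not> (t = 0 \<or> t = length rs - 1)"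
      hence "0 < t" "t < length rs - 1" using t by auto
      thus False using e ap by (auto simp: apex_def)
    qed
  next
    assume "t = 0 \<or> t = length rs - 1"
    thus "{u, rs!t} \<in> E" using ap h l by (auto simp: apex_def)
  qed
qed

lemma ipath_far: "ipath E rs \<Longrightarrow> s < length rs \<Longrightarrow> t < length rs \<Longrightarrow> Suc s < t \<or> Suc t < s \<Longrightarrow> {rs!s, rs!t} \<notin> E"
  using ipath_adj[of E rs s t] by auto

lemma seg_lt:
  assumes g: "graph V E" and u: "u \<in> V" and ap: "apex E u rs" and rV: "set rs \<subseteq> V"
    and st: "Suc s < t" "t < length rs"
    and xl: "xl \<noteq> []" "walk E xl" "set xl \<subseteq> V" "\<forall>x\<in>set xl. x \<notin> Wset V E u \<and> {u,x} \<notin> E \<and> x \<noteq> u"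
    and e1: "{rs!s, hd xl} \<in> E" and e2: "{last xl, rs!t} \<in> E"
  shows False
proof -
  note F = apex_facts[OF ap]
  define n where "n = length rs"
  show False
  proof (rule cr2[OF g u _ _ _ xl, of "take (Suc s) rs" "drop t rs"])
    show "take (Suc s) rs \<noteq> []" "walk E (take (Suc s) rs)" "set (take (Suc s) rs) \<subseteq> V"
      using st F(1) rV by (auto intro: walk_take ipath_walk dest: in_set_takeD)
    show "drop t rs \<noteq> []" "walk E (drop t rs)" "set (drop t rs) \<subseteq> V"
      using st F(1) rV by (auto intro: walk_drop ipath_walk dest: in_set_dropD)
    have "last (take (Suc s) rs) = rs!s" using st by (intro last_take_Suc) simp
    thus "{last (take (Suc s) rs), hd xl} \<in> E" using e1 by simp
    show "{last xl, hd (drop t rs)} \<in> E" using e2 st by (simp add: hd_drop_conv_nth)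
    show "{u, hd (take (Suc s) rs)} \<in> E" using ap st by (simp add: apex_def)
    show "{u, last (drop t rs)} \<in> E" using ap st by (simp add: apex_def)
    show "set (take (Suc s) rs) \<inter> set (drop t rs) = {}"
      using F(2) st by (auto simp: set_take_disj_set_drop_if_distinct)
    show "\<And>x y. x \<in> set (take (Suc s) rs) \<Longrightarrow> y \<in> set (drop t rs) \<Longrightarrow> {x, y} \<notin> E"
    proof -
      fix x y assume "x \<in> set (take (Suc s) rs)" "y \<in> set (drop t rs)"
      then obtain a b where "a < Suc s" "a < length rs" "x = rs!a" "b \<ge> t" "b < length rs" "y = rs!b"
        using in_take_nth in_drop_nth by metis
      thus "{x, y} \<notin> E" using ipath_far[OF F(1)] st by auto
    qed
    show "u \<notin> set (take (Suc s) rs)" "u \<notin> set (drop t rs)" using F(4) by (auto dest: in_set_takeD in_set_dropD)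
    fix v assume v: "v \<in> set (take (Suc s) rs) \<union> set (drop t rs)" and e: "{u, v} \<in> E"
    have "v \<in> set rs" using v by (auto dest: in_set_takeD in_set_dropD)
    then obtain c where c: "c < length rs" "v = rs!c" by (auto simp: in_set_conv_nth)
    hence "c = 0 \<or> c = length rs - 1" using F(7) e by auto
    moreover have "hd (take (Suc s) rs) = rs!0" using F(5) st by simp
    moreover have "last (drop t rs) = rs!(length rs - 1)" using F(6) st by simp
    ultimately show "v = hd (take (Suc s) rs) \<or> v = last (drop t rs)" using c by auto
  qed
qed

lemma seg:
  assumes g: "graph V E" and u: "u \<in> V" and ap: "apex E u rs" and rV: "set rs \<subseteq> V"
    and st: "Suc s < t \<or> Suc t < s" "s < length rs" "t < length rs"
    and xl: "xl \<noteq> []" "walk E xl" "set xl \<subseteq> V" "\<forall>x\<in>set xl. x \<notin> Wset V E u \<and> {u,x} \<notin> E \<and> x \<noteq> u"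
    and e1: "{rs!s, hd xl} \<in> E" and e2: "{last xl, rs!t} \<in> E"
  shows False
  using st(1)
proof
  assume "Suc s < t" thus False using seg_lt[OF g u ap rV _ st(3) xl e1 e2] by blast
next
  assume lt: "Suc t < s"
  show False
  proof (rule seg_lt[OF g u ap rV lt st(2), of "rev xl"])
    show "rev xl \<noteq> []" "walk E (rev xl)" "set (rev xl) \<subseteq> V" "\<forall>x\<in>set (rev xl). x \<notin> Wset V E u \<and> {u,x} \<notin> E \<and> x \<noteq> u"
      using xl by (auto intro: walk_rev)
    show "{rs ! t, hd (rev xl)} \<in> E" using e2 xl by (simp add: hd_rev insert_commute)
    show "{last (rev xl), rs ! s} \<in> E" using e1 xl by (simp add: last_rev insert_commute)
  qed
qed



lemma side:
  assumes g: "graph V E" and nc: "NC_property V E u" and u: "u \<in> V"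
    and ap: "apex E u rs" and rV: "set rs \<subseteq> V"
    and j: "0 < j" "j < length rs - 1"
    and ys: "walk E ys" "set ys \<subseteq> V" "set ys \<inter> set rs = {}" "u \<notin> set ys"
       "\<forall>y\<in>set ys. {y, rs!j} \<notin> E"
  shows "(\<forall>y\<in>set ys. \<forall>c<j. {y, rs!c} \<notin> E) \<or> (\<forall>y\<in>set ys. \<forall>c. j < c \<longrightarrow> c < length rs \<longrightarrow> {y, rs!c} \<notin> E)"
proof (rule ccontr)
  assume "\<not> ?thesis"
  then obtain y1 c1 y2 c2 where a: "y1 \<in> set ys" "c1 < j" "{y1, rs!c1} \<in> E"
    and b: "y2 \<in> set ys" "j < c2" "c2 < length rs" "{y2, rs!c2} \<in> E" by blast
  have "ys \<noteq> []" using a by auto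
  show False by (rule interval[OF g nc u ap rV j ys(1) \<open>ys \<noteq> []\<close> ys(2-5) a(2) a(1) a(3) b(2) b(3) b(1) b(4)])
qed

lemma set_bl: "ts \<noteq> [] \<Longrightarrow> set ts = insert (last ts) (set (butlast ts))"
proof -
  assume "ts \<noteq> []"
  hence "set ts = set (butlast ts @ [last ts])" by simp
  thus ?thesis by auto
qed

lemma walk_butlast: "walk E ts \<Longrightarrow> walk E (butlast ts)"
  by (simp add: butlast_conv_take walk_take)

lemma walk_last2: "walk E ts \<Longrightarrow> butlast ts \<noteq> [] \<Longrightarrow> {last (butlast ts), last ts} \<in> E"
proof -
  assume w: "walk E ts" and ne: "butlast ts \<noteq> []"
  have ts: "ts \<noteq> []" using ne by auto
  define m where "m = length ts"
  have "length (butlast ts) \<noteq> 0" using ne by (metis length_0_conv)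
  hence m2: "m \<ge> 2" using m_def by simp
  have "{ts!(m-2), ts!Suc (m-2)} \<in> E" using w m2 m_def by (simp add: walk_def)
  moreover have "Suc (m-2) = m - 1" using m2 by simp
  moreover have "last (butlast ts) = ts!(m-2)"
  proof -
    have "last (butlast ts) = butlast ts ! (length (butlast ts) - 1)" using ne by (simp add: last_conv_nth)
    also have "\<dots> = ts ! (m - 2)" using m2 m_def by (simp add: nth_butlast numeral_2_eq_2)
    finally show ?thesis .
  qed
  moreover have "last ts = ts!(m-1)" using ts m_def by (simp add: last_conv_nth)
  ultimately show ?thesis by simp
qed

lemma fin_low:
  assumes g: "graph V E" and u: "u \<in> V" and ap: "apex E u rs" and rV: "set rs \<subseteq> V"
    and j: "j < length rs - 1"
    and xl: "xl \<noteq> []" "walk E xl" "set xl \<subseteq> V" "\<forall>x\<in>set xl. x \<notin> Wset V E u \<and> {u,x} \<notin> E \<and> x \<noteq> u"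
    and e1: "{rs!j, hd xl} \<in> E"
    and ts: "ts \<noteq> []" "walk E ts" "set ts \<subseteq> V" "{last xl, hd ts} \<in> E" "{u, last ts} \<in> E"
      "set (take (Suc j) rs) \<inter> set ts = {}" "\<forall>y\<in>set ts. \<forall>c\<le>j. {rs!c, y} \<notin> E" "u \<notin> set ts"
      "\<forall>v\<in>set ts. {u,v} \<in> E \<longrightarrow> v = last ts"
  shows False
proof -
  note F = apex_facts[OF ap]
  show False
  proof (rule cr2[OF g u _ _ _ xl ts(1-3) _ ts(4) _ ts(5) ts(6)])
    show "take (Suc j) rs \<noteq> []" "walk E (take (Suc j) rs)" "set (take (Suc j) rs) \<subseteq> V"
      using j F(1) rV by (auto intro: walk_take ipath_walk dest: in_set_takeD)
    show "{last (take (Suc j) rs), hd xl} \<in> E" using e1 j by (simp add: last_take_Suc)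
    show "{u, hd (take (Suc j) rs)} \<in> E" using ap j by (simp add: apex_def)
    show "u \<notin> set (take (Suc j) rs)" "u \<notin> set ts" using F(4) ts(8) by (auto dest: in_set_takeD)
    show "\<And>x y. x \<in> set (take (Suc j) rs) \<Longrightarrow> y \<in> set ts \<Longrightarrow> {x, y} \<notin> E"
    proof -
      fix x y assume "x \<in> set (take (Suc j) rs)" "y \<in> set ts"
      then obtain c where "c < Suc j" "x = rs!c" using in_take_nth by metis
      thus "{x, y} \<notin> E" using ts(7) \<open>y \<in> set ts\<close> by auto
    qed
    fix v assume v: "v \<in> set (take (Suc j) rs) \<union> set ts" and e: "{u, v} \<in> E"
    show "v = hd (take (Suc j) rs) \<or> v = last ts"
    proof (cases "v \<in> set ts")
      case True thus ?thesis using ts(9) e by auto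
    next
      case False
      hence "v \<in> set (take (Suc j) rs)" using v by simp
      then obtain c where c: "c < Suc j" "c < length rs" "v = rs!c" using in_take_nth by metis
      hence "c = 0" using F(7)[of c] e j by auto
      thus ?thesis using c F(5) j by simp
    qed
  qed
qed

lemma fin_high:
  assumes g: "graph V E" and u: "u \<in> V" and ap: "apex E u rs" and rV: "set rs \<subseteq> V"
    and j: "0 < j" "j < length rs"
    and xl: "xl \<noteq> []" "walk E xl" "set xl \<subseteq> V" "\<forall>x\<in>set xl. x \<notin> Wset V E u \<and> {u,x} \<notin> E \<and> x \<noteq> u"
    and e1: "{rs!j, hd xl} \<in> E"
    and ts: "ts \<noteq> []" "walk E ts" "set ts \<subseteq> V" "{last xl, hd ts} \<in> E" "{u, last ts} \<in> E"
      "set (drop j rs) \<inter> set ts = {}" "\<forall>y\<in>set ts. \<forall>c. j \<le> c \<longrightarrow> c < length rs \<longrightarrow> {rs!c, y} \<notin> E" "u \<notin> set ts"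
      "\<forall>v\<in>set ts. {u,v} \<in> E \<longrightarrow> v = last ts"
  shows False
proof -
  note F = apex_facts[OF ap]
  show False
  proof (rule cr2[OF g u _ _ _ xl ts(1-3) _ ts(4) _ ts(5)])
    show "rev (drop j rs) \<noteq> []" "walk E (rev (drop j rs))" "set (rev (drop j rs)) \<subseteq> V"
      using j F(1) rV by (auto intro: walk_rev walk_drop ipath_walk dest: in_set_dropD)
    show "{last (rev (drop j rs)), hd xl} \<in> E" using e1 j by (simp add: last_rev hd_drop_conv_nth)
    show "{u, hd (rev (drop j rs))} \<in> E" using ap j by (simp add: apex_def hd_rev)
    show "set (rev (drop j rs)) \<inter> set ts = {}" using ts(6) by simp
    show "u \<notin> set (rev (drop j rs))" "u \<notin> set ts" using F(4) ts(8) by (auto dest: in_set_dropD)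
    show "\<And>x y. x \<in> set (rev (drop j rs)) \<Longrightarrow> y \<in> set ts \<Longrightarrow> {x, y} \<notin> E"
    proof -
      fix x y assume "x \<in> set (rev (drop j rs))" "y \<in> set ts"
      then obtain c where "c \<ge> j" "c < length rs" "x = rs!c" using in_drop_nth by (metis set_rev)
      thus "{x, y} \<notin> E" using ts(7) \<open>y \<in> set ts\<close> by auto
    qed
    fix v assume v: "v \<in> set (rev (drop j rs)) \<union> set ts" and e: "{u, v} \<in> E"
    show "v = hd (rev (drop j rs)) \<or> v = last ts"
    proof (cases "v \<in> set ts")
      case True thus ?thesis using ts(9) e by auto
    next
      case False
      hence "v \<in> set (drop j rs)" using v by simp
      then obtain c where c: "c \<ge> j" "c < length rs" "v = rs!c" using in_drop_nth by metis
      hence "c = length rs - 1" using F(7)[of c] e j by auto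
      thus ?thesis using c F(6) j by (simp add: hd_rev)
    qed
  qed
qed



lemma fin:
  assumes g: "graph V E" and nc: "NC_property V E u" and u: "u \<in> V"
    and ap: "apex E u rs" and rV: "set rs \<subseteq> V"
    and j: "0 < j" "j < length rs - 1"
    and xl: "xl \<noteq> []" "walk E xl" "set xl \<subseteq> V" "\<forall>x\<in>set xl. x \<notin> Wset V E u \<and> {u,x} \<notin> E \<and> x \<noteq> u"
    and e1: "{rs!j, hd xl} \<in> E" and e2: "{last xl, hd ts} \<in> E"
    and ts: "ts \<noteq> []" "walk E ts" "set ts \<subseteq> V"
      "\<forall>v\<in>set (butlast ts). v \<notin> set rs \<and> {u,v} \<notin> E \<and> v \<noteq> u"
      "\<forall>v\<in>set ts. {rs!j, v} \<notin> E \<and> v \<noteq> rs!j"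
      "last ts \<in> set rs \<or> {u, last ts} \<in> E" "last ts \<noteq> u"
  shows False
proof -
  note F = apex_facts[OF ap]
  define n where "n = length rs"
  define Y where "Y = butlast ts"
  define z where "z = last ts"
  have sts: "set ts = insert z (set Y)" using ts(1) by (simp add: set_bl Y_def z_def)
  have Yw: "walk E Y" using ts(2) by (simp add: Y_def walk_butlast)
  have YV: "set Y \<subseteq> V" using ts(3) sts by auto
  have Yr: "set Y \<inter> set rs = {}" using ts(4) by (auto simp: Y_def)
  have Yu: "u \<notin> set Y" using ts(4) by (auto simp: Y_def)
  have Yj: "\<forall>y\<in>set Y. {y, rs!j} \<notin> E" using ts(5) sts by (auto simp: insert_commute)
  have YnU: "\<And>v. v \<in> set Y \<Longrightarrow> {u,v} \<notin> E" using ts(4) by (auto simp: Y_def)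
  have lastR: "{u, rs!(n-1)} \<in> E" using F(7)[of "n-1"] F(3) n_def by simp
  show False
  proof (cases "z \<in> set rs")
    case False
    have uz: "{u, z} \<in> E" using ts(6) False by (simp add: z_def)
    have tr: "set ts \<inter> set rs = {}" using Yr False sts by auto
    have tu: "u \<notin> set ts" using Yu ts(7) sts by (auto simp: z_def)
    have tj: "\<forall>y\<in>set ts. {y, rs!j} \<notin> E" using ts(5) by (auto simp: insert_commute)
    have only: "\<forall>v\<in>set ts. {u,v} \<in> E \<longrightarrow> v = last ts" using sts YnU by (auto simp: z_def)
    from side[OF g nc u ap rV j ts(2) ts(3) tr tu tj] show False
    proof
      assume L: "\<forall>y\<in>set ts. \<forall>c<j. {y, rs ! c} \<notin> E"
      show False
      proof (rule fin_low[OF g u ap rV j(2) xl e1 ts(1-3) e2 uz[unfolded z_def] _ _ tu only])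
        show "set (take (Suc j) rs) \<inter> set ts = {}" using tr by (auto dest: in_set_takeD)
        show "\<forall>y\<in>set ts. \<forall>c\<le>j. {rs ! c, y} \<notin> E"
        proof (intro ballI allI impI)
          fix y c assume y: "y \<in> set ts" and c: "c \<le> j"
          show "{rs ! c, y} \<notin> E"
          proof (cases "c = j")
            case True thus ?thesis using ts(5) y by auto
          next
            case False thus ?thesis using L y c by (auto simp: insert_commute)
          qed
        qed
      qed
    next
      assume H: "\<forall>y\<in>set ts. \<forall>c. j < c \<longrightarrow> c < length rs \<longrightarrow> {y, rs ! c} \<notin> E"
      show False
      proof (rule fin_high[OF g u ap rV j(1) _ xl e1 ts(1-3) e2 uz[unfolded z_def] _ _ tu only])
        show "j < length rs" using j by simp
        show "set (drop j rs) \<inter> set ts = {}" using tr by (auto dest: in_set_dropD)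
        show "\<forall>y\<in>set ts. \<forall>c. j \<le> c \<longrightarrow> c < length rs \<longrightarrow> {rs ! c, y} \<notin> E"
        proof (intro ballI allI impI)
          fix y c assume y: "y \<in> set ts" and c: "j \<le> c" "c < length rs"
          show "{rs ! c, y} \<notin> E"
          proof (cases "c = j")
            case True thus ?thesis using ts(5) y by auto
          next
            case False thus ?thesis using H y c by (auto simp: insert_commute)
          qed
        qed
      qed
    qed
  next
    case True
    then obtain i where i: "i < n" "z = rs!i" by (auto simp: in_set_conv_nth n_def)
    have zin: "z \<in> set ts" using ts(1) by (simp add: z_def)
    have ij: "i \<noteq> j" using ts(5) i zin by auto
    have ijE: "{rs!j, rs!i} \<notin> E" using ts(5) i zin by auto
    hence far: "Suc j < i \<or> Suc i < j" using ij ipath_adj[OF F(1), of j i] i j n_def by auto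
    have tu: "u \<notin> set ts" using Yu ts(7) sts by (auto simp: z_def)
    have lastY: "Y \<noteq> [] \<Longrightarrow> {last Y, z} \<in> E" using walk_last2[OF ts(2)] by (simp add: Y_def z_def)
    note sideY = side[OF g nc u ap rV j Yw YV Yr Yu Yj]
    from far show False
    proof
      assume ji: "Suc j < i"
      have LowY: "\<forall>y\<in>set Y. \<forall>c<j. {y, rs ! c} \<notin> E"
      proof (cases "Y = []")
        case True thus ?thesis by simp
      next
        case False
        have "{last Y, rs!i} \<in> E" using lastY[OF False] i by simp
        moreover have "last Y \<in> set Y" using False by simp
        moreover have "j < i" "i < length rs" using ji i n_def by auto
        ultimately have "\<not> (\<forall>y\<in>set Y. \<forall>c. j < c \<longrightarrow> c < length rs \<longrightarrow> {y, rs ! c} \<notin> E)"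
          by blast
        thus ?thesis using sideY by blast
      qed
      define ts' where "ts' = ts @ drop (Suc i) rs"
      have mem: "\<And>y. y \<in> set ts' \<Longrightarrow> y \<in> set Y \<or> (\<exists>c. i \<le> c \<and> c < n \<and> y = rs!c)"
      proof -
        fix y assume "y \<in> set ts'"
        hence "y \<in> set ts \<or> y \<in> set (drop (Suc i) rs)" by (auto simp: ts'_def)
        thus "y \<in> set Y \<or> (\<exists>c. i \<le> c \<and> c < n \<and> y = rs!c)"
        proof
          assume "y \<in> set ts" thus ?thesis using sts i by auto
        next
          assume "y \<in> set (drop (Suc i) rs)"
          then obtain c where "c \<ge> Suc i" "c < n" "y = rs!c" using in_drop_nth n_def by metis
          hence "i \<le> c \<and> c < n \<and> y = rs!c" by simp
          thus ?thesis by blast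
        qed
      qed
      have lts': "last ts' = rs!(n-1)"
      proof (cases "Suc i < n")
        case True thus ?thesis using F(6) n_def by (simp add: ts'_def)
      next
        case False hence "i = n - 1" using i by simp
        hence "drop (Suc i) rs = []" using i n_def by simp
        thus ?thesis using i ts(1) \<open>i = n - 1\<close> by (simp add: ts'_def z_def)
      qed
      show False
      proof (rule fin_low[OF g u ap rV j(2) xl e1])
        show "ts' \<noteq> []" using ts(1) by (simp add: ts'_def)
        show "walk E ts'" unfolding ts'_def
        proof (rule walk_append[OF ts(2) walk_drop[OF ipath_walk[OF F(1)]]])
          assume "drop (Suc i) rs \<noteq> []"
          hence "Suc i < n" using n_def by simp
          thus "{last ts, hd (drop (Suc i) rs)} \<in> E"
            using ipath_adj[OF F(1), of i "Suc i"] i n_def by (simp add: z_def[symmetric] hd_drop_conv_nth)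
        qed
        show "set ts' \<subseteq> V" using ts(3) rV by (auto simp: ts'_def dest: in_set_dropD)
        show "{last xl, hd ts'} \<in> E" using e2 ts(1) by (simp add: ts'_def)
        show "{u, last ts'} \<in> E" using lts' lastR by simp
        show "set (take (Suc j) rs) \<inter> set ts' = {}"
        proof (rule ccontr)
          assume "set (take (Suc j) rs) \<inter> set ts' \<noteq> {}"
          then obtain y where y1: "y \<in> set (take (Suc j) rs)" and y2: "y \<in> set ts'" by auto
          obtain a where a: "a < Suc j" "a < n" "y = rs!a" using in_take_nth[OF y1] n_def by metis
          from mem[OF y2] show False
          proof
            assume "y \<in> set Y" thus False using Yr a n_def by auto
          next
            assume "\<exists>c. i \<le> c \<and> c < n \<and> y = rs!c"
            then obtain c where "i \<le> c" "c < n" "y = rs!c" by auto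
            thus False using a F(2) ji n_def by (simp add: nth_eq_iff_index_eq)
          qed
        qed
        show "\<forall>y\<in>set ts'. \<forall>c\<le>j. {rs ! c, y} \<notin> E"
        proof (intro ballI allI impI)
          fix y c assume y: "y \<in> set ts'" and c: "c \<le> j"
          from mem[OF y] show "{rs ! c, y} \<notin> E"
          proof
            assume yY: "y \<in> set Y"
            show ?thesis
            proof (cases "c = j")
              case True thus ?thesis using Yj yY by (auto simp: insert_commute)
            next
              case False thus ?thesis using LowY yY c by (auto simp: insert_commute)
            qed
          next
            assume "\<exists>c'. i \<le> c' \<and> c' < n \<and> y = rs!c'"
            then obtain c' where "i \<le> c'" "c' < n" "y = rs!c'" by auto
            thus ?thesis using ipath_far[OF F(1), of c c'] c ji j n_def by auto
          qed
        qed
        show "u \<notin> set ts'" using tu F(4) by (auto simp: ts'_def dest: in_set_dropD)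
        show "\<forall>v\<in>set ts'. {u, v} \<in> E \<longrightarrow> v = last ts'"
        proof (intro ballI impI)
          fix v assume v: "v \<in> set ts'" and e: "{u, v} \<in> E"
          from mem[OF v] show "v = last ts'"
          proof
            assume "v \<in> set Y" thus ?thesis using YnU e by auto
          next
            assume "\<exists>c'. i \<le> c' \<and> c' < n \<and> v = rs!c'"
            then obtain c' where c': "i \<le> c'" "c' < n" "v = rs!c'" by auto
            hence "c' = n - 1" using F(7)[of c'] e ji n_def by auto
            thus ?thesis using c' lts' by simp
          qed
        qed
      qed
    next
      assume ij2: "Suc i < j"
      have HighY: "\<forall>y\<in>set Y. \<forall>c. j < c \<longrightarrow> c < length rs \<longrightarrow> {y, rs ! c} \<notin> E"
      proof (cases "Y = []")
        case True thus ?thesis by simp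
      next
        case False
        have "{last Y, rs!i} \<in> E" using lastY[OF False] i by simp
        moreover have "last Y \<in> set Y" using False by simp
        moreover have "i < j" using ij2 by simp
        ultimately have "\<not> (\<forall>y\<in>set Y. \<forall>c<j. {y, rs ! c} \<notin> E)"
          by blast
        thus ?thesis using sideY by blast
      qed
      define ts' where "ts' = ts @ rev (take i rs)"
      have mem: "\<And>y. y \<in> set ts' \<Longrightarrow> y \<in> set Y \<or> (\<exists>c. c \<le> i \<and> y = rs!c)"
      proof -
        fix y assume "y \<in> set ts'"
        hence "y \<in> set ts \<or> y \<in> set (take i rs)" by (auto simp: ts'_def)
        thus "y \<in> set Y \<or> (\<exists>c. c \<le> i \<and> y = rs!c)"
        proof
          assume "y \<in> set ts" thus ?thesis using sts i by auto
        next
          assume "y \<in> set (take i rs)"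
          then obtain c where "c < i" "y = rs!c" using in_take_nth by metis
          hence "c \<le> i \<and> y = rs!c" by simp
          thus ?thesis by blast
        qed
      qed
      have lts': "last ts' = rs!0"
      proof (cases "i = 0")
        case False
        hence "take i rs \<noteq> []" using i n_def by (cases rs) auto
        hence "last (ts' ) = hd (take i rs)" by (simp add: ts'_def last_rev)
        also have "\<dots> = rs!0" using False i n_def by (cases rs) auto
        finally show ?thesis .
      next
        case True
        thus ?thesis using i ts(1) by (simp add: ts'_def z_def)
      qed
      show False
      proof (rule fin_high[OF g u ap rV j(1) _ xl e1])
        show "j < length rs" using j by simp
        show "ts' \<noteq> []" using ts(1) by (simp add: ts'_def)
        show "walk E ts'" unfolding ts'_def
        proof (rule walk_append[OF ts(2) walk_rev[OF walk_take[OF ipath_walk[OF F(1)]]]])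
          assume "rev (take i rs) \<noteq> []"
          hence i0: "0 < i" by simp
          have "hd (rev (take i rs)) = rs!(i-1)" using i0 i n_def
            by (simp add: hd_rev) (metis Suc_pred last_take_Suc less_imp_diff_less)
          moreover have "{rs!i, rs!(i-1)} \<in> E" using ipath_adj[OF F(1), of i "i-1"] i0 i n_def by simp
          ultimately show "{last ts, hd (rev (take i rs))} \<in> E" using i by (simp add: z_def[symmetric])
        qed
        show "set ts' \<subseteq> V" using ts(3) rV by (auto simp: ts'_def dest: in_set_takeD)
        show "{last xl, hd ts'} \<in> E" using e2 ts(1) by (simp add: ts'_def)
        show "{u, last ts'} \<in> E" using lts' ap F(5) by (simp add: apex_def)
        show "set (drop j rs) \<inter> set ts' = {}"
        proof (rule ccontr)
          assume "set (drop j rs) \<inter> set ts' \<noteq> {}"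
          then obtain y where y1: "y \<in> set (drop j rs)" and y2: "y \<in> set ts'" by auto
          obtain a where a: "a \<ge> j" "a < n" "y = rs!a" using in_drop_nth[OF y1] n_def by metis
          from mem[OF y2] show False
          proof
            assume "y \<in> set Y" thus False using Yr a n_def by auto
          next
            assume "\<exists>c. c \<le> i \<and> y = rs!c"
            then obtain c where "c \<le> i" "y = rs!c" by auto
            thus False using a F(2) ij2 i n_def by (simp add: nth_eq_iff_index_eq)
          qed
        qed
        show "\<forall>y\<in>set ts'. \<forall>c. j \<le> c \<longrightarrow> c < length rs \<longrightarrow> {rs ! c, y} \<notin> E"
        proof (intro ballI allI impI)
          fix y c assume y: "y \<in> set ts'" and c: "j \<le> c" "c < length rs"
          from mem[OF y] show "{rs ! c, y} \<notin> E"
          proof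
            assume yY: "y \<in> set Y"
            show ?thesis
            proof (cases "c = j")
              case True thus ?thesis using Yj yY by (auto simp: insert_commute)
            next
              case False thus ?thesis using HighY yY c by (auto simp: insert_commute)
            qed
          next
            assume "\<exists>c'. c' \<le> i \<and> y = rs!c'"
            then obtain c' where "c' \<le> i" "y = rs!c'" by auto
            thus ?thesis using ipath_far[OF F(1), of c c'] c ij2 i n_def by auto
          qed
        qed
        show "u \<notin> set ts'" using tu F(4) by (auto simp: ts'_def dest: in_set_takeD)
        show "\<forall>v\<in>set ts'. {u, v} \<in> E \<longrightarrow> v = last ts'"
        proof (intro ballI impI)
          fix v assume v: "v \<in> set ts'" and e: "{u, v} \<in> E"
          from mem[OF v] show "v = last ts'"
          proof
            assume "v \<in> set Y" thus ?thesis using YnU e by auto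
          next
            assume "\<exists>c'. c' \<le> i \<and> v = rs!c'"
            then obtain c' where c': "c' \<le> i" "v = rs!c'" by auto
            hence "c' = 0" using F(7)[of c'] e ij2 i j n_def by auto
            thus ?thesis using c' lts' by simp
          qed
        qed
      qed
    qed
  qed
qed



lemma route_from:
  assumes rr: "rr \<noteq> []" "walk E rr" "set rr \<subseteq> V" "u \<notin> set rr" "{u, last rr} \<in> E"
    "\<forall>v\<in>set rr. {a, v} \<notin> E \<and> v \<noteq> a"
  shows "\<exists>ts. ts \<noteq> [] \<and> walk E ts \<and> set ts \<subseteq> V \<and> hd ts = hd rr
    \<and> (\<forall>v\<in>set (butlast ts). v \<notin> R \<and> {u,v} \<notin> E \<and> v \<noteq> u)
    \<and> (\<forall>v\<in>set ts. {a, v} \<notin> E \<and> v \<noteq> a)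
    \<and> (last ts \<in> R \<or> {u, last ts} \<in> E) \<and> last ts \<noteq> u"
proof -
  define P where "P c \<longleftrightarrow> c < length rr \<and> (rr!c \<in> R \<or> {u, rr!c} \<in> E)" for c
  have ex: "P (length rr - 1)" using rr(1,5) by (simp add: P_def last_conv_nth)
  define c where "c = (LEAST c. P c)"
  have Pc: "P c" unfolding c_def by (rule LeastI[of P, OF ex])
  have notP: "\<And>t. t < c \<Longrightarrow> \<not> P t" unfolding c_def by (rule not_less_Least)
  define ts where "ts = take (Suc c) rr"
  have cl: "c < length rr" using Pc by (simp add: P_def)
  have ne: "ts \<noteq> []" using rr(1) by (simp add: ts_def)
  have lt: "last ts = rr!c" using cl by (simp add: ts_def last_take_Suc)
  have bl: "butlast ts = take c rr" using cl by (simp add: ts_def butlast_take min_def)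
  have sub: "set ts \<subseteq> set rr" by (auto simp: ts_def dest: in_set_takeD)
  show ?thesis
  proof (intro exI[of _ ts] conjI)
    show "ts \<noteq> []" by fact
    show "walk E ts" using rr(2) by (simp add: ts_def walk_take)
    show "set ts \<subseteq> V" using sub rr(3) by auto
    show "hd ts = hd rr" using rr(1) by (cases rr) (auto simp: ts_def)
    show "\<forall>v\<in>set (butlast ts). v \<notin> R \<and> {u, v} \<notin> E \<and> v \<noteq> u"
    proof
      fix v assume "v \<in> set (butlast ts)"
      then obtain t where t: "t < c" "t < length rr" "v = rr!t" unfolding bl using in_take_nth by metis
      hence "\<not> P t" using notP by simp
      moreover have "v \<noteq> u" using rr(4) t by auto
      ultimately show "v \<notin> R \<and> {u, v} \<notin> E \<and> v \<noteq> u" using t by (auto simp: P_def)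
    qed
    show "\<forall>v\<in>set ts. {a, v} \<notin> E \<and> v \<noteq> a" using sub rr(6) by auto
    show "last ts \<in> R \<or> {u, last ts} \<in> E" using Pc lt by (simp add: P_def)
    show "last ts \<noteq> u" using lt cl rr(4) by auto
  qed
qed

lemma hole_apex:
  assumes "H \<in> holes_at V E u"
  shows "\<exists>rs. apex E u rs \<and> set rs = H - {u} \<and> set rs \<subseteq> V"
proof -
  from assms obtain xs where "hl E xs" "set xs = H" "H \<subseteq> V" "u \<in> H"
    by (auto simp: holes_at_def holes_def is_hole_hl)
  thus ?thesis using hl_apex[of E xs u] by auto
qed

lemma main:
  assumes g: "graph V E" and nc: "NC_property V E u" and u: "u \<in> V"
    and a: "a \<in> Wset V E u" "{u,a} \<notin> E"
    and b: "b \<in> V" "b \<noteq> u" "{u,b} \<in> E \<or> b \<in> Wset V E u" "{a,b} \<notin> E" "a \<noteq> b"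
    and xl: "xl \<noteq> []" "walk E xl" "set xl \<subseteq> V" "\<forall>x\<in>set xl. x \<notin> Wset V E u \<and> {u,x} \<notin> E \<and> x \<noteq> u"
    and e1: "{a, hd xl} \<in> E" and e2: "{last xl, b} \<in> E"
  shows False
proof -
  obtain H where H: "H \<in> holes_at V E u" "a \<in> H" "a \<noteq> u" using a by (auto simp: Wset_def)
  obtain rs where rs: "apex E u rs" "set rs = H - {u}" "set rs \<subseteq> V" using hole_apex[OF H(1)] by blast
  note F = apex_facts[OF rs(1)]
  define n where "n = length rs"
  have "a \<in> set rs" using H rs(2) by auto
  then obtain j where jj: "j < n" "a = rs!j" by (auto simp: in_set_conv_nth n_def)
  have j: "0 < j" "j < length rs - 1" using F(7)[of j] jj a(2) n_def by auto
  have e1': "{rs!j, hd xl} \<in> E" using e1 jj by simp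
  have bnr: "b \<notin> set rs"
  proof
    assume "b \<in> set rs"
    then obtain l where l: "l < n" "b = rs!l" by (auto simp: in_set_conv_nth n_def)
    have "l \<noteq> j" using l jj b(5) by auto
    moreover have "\<not> (l = Suc j \<or> j = Suc l)" using ipath_adj[OF F(1), of j l] l jj b(4) n_def by auto
    ultimately have "Suc j < l \<or> Suc l < j" by auto
    thus False using seg[OF g u rs(1) rs(3) _ _ _ xl e1'] l jj e2 n_def by auto
  qed
  have "\<exists>ts. ts \<noteq> [] \<and> walk E ts \<and> set ts \<subseteq> V \<and> hd ts = b
    \<and> (\<forall>v\<in>set (butlast ts). v \<notin> set rs \<and> {u,v} \<notin> E \<and> v \<noteq> u)
    \<and> (\<forall>v\<in>set ts. {a, v} \<notin> E \<and> v \<noteq> a)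
    \<and> (last ts \<in> set rs \<or> {u, last ts} \<in> E) \<and> last ts \<noteq> u"
  proof (cases "{u,b} \<in> E")
    case True
    show ?thesis using True b by (intro exI[of _ "[b]"]) (auto simp: insert_commute)
  next
    case False
    hence bW: "b \<in> Wset V E u" using b by simp
    obtain Hb where Hb: "Hb \<in> holes_at V E u" "b \<in> Hb" using bW by (auto simp: Wset_def)
    obtain ss where ss: "apex E u ss" "set ss = Hb - {u}" "set ss \<subseteq> V" using hole_apex[OF Hb(1)] by blast
    note G = apex_facts[OF ss(1)]
    define m where "m = length ss"
    have "b \<in> set ss" using Hb ss(2) b(2) by auto
    then obtain l where ll: "l < m" "b = ss!l" by (auto simp: in_set_conv_nth m_def)
    have l: "0 < l" "l < length ss - 1" using G(7)[of l] ll False m_def by auto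
    have ans: "a \<notin> set ss"
    proof
      assume "a \<in> set ss"
      then obtain l' where l': "l' < m" "a = ss!l'" by (auto simp: in_set_conv_nth m_def)
      have "l' \<noteq> l" using l' ll b(5) by auto
      moreover have "\<not> (l' = Suc l \<or> l = Suc l')"
        using ipath_adj[OF G(1), of l l'] l' ll b(4) m_def by (auto simp: insert_commute)
      ultimately have far: "Suc l < l' \<or> Suc l' < l" by auto
      show False
      proof (rule seg[OF g u ss(1) ss(3) far _ _, of "rev xl"])
        show "l < length ss" "l' < length ss" using ll l' m_def by auto
        show "rev xl \<noteq> []" "walk E (rev xl)" "set (rev xl) \<subseteq> V"
          "\<forall>x\<in>set (rev xl). x \<notin> Wset V E u \<and> {u,x} \<notin> E \<and> x \<noteq> u" using xl by (auto intro: walk_rev)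
        show "{ss ! l, hd (rev xl)} \<in> E" using e2 ll xl by (simp add: hd_rev insert_commute)
        show "{last (rev xl), ss ! l'} \<in> E" using e1 l' xl by (simp add: last_rev insert_commute)
      qed
    qed
    have aV: "a \<in> V" using H rs by (metis graph_V[OF g] e1)
    have sideA: "(\<forall>y\<in>set [a]. \<forall>c<l. {y, ss!c} \<notin> E) \<or>
        (\<forall>y\<in>set [a]. \<forall>c. l < c \<longrightarrow> c < length ss \<longrightarrow> {y, ss!c} \<notin> E)"
    proof (rule side[OF g nc u ss(1) ss(3) l])
      show "walk E [a]" "set [a] \<subseteq> V" "set [a] \<inter> set ss = {}" "u \<notin> set [a]"
        using aV ans H(3) by auto
      show "\<forall>y\<in>set [a]. {y, ss ! l} \<notin> E" using b(4) ll by simp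
    qed
    have "\<exists>rr. rr \<noteq> [] \<and> walk E rr \<and> set rr \<subseteq> V \<and> u \<notin> set rr \<and> {u, last rr} \<in> E
       \<and> (\<forall>v\<in>set rr. {a, v} \<notin> E \<and> v \<noteq> a) \<and> hd rr = b"
      using sideA
    proof
      assume L: "\<forall>y\<in>set [a]. \<forall>c<l. {y, ss!c} \<notin> E"
      define rr where "rr = rev (take (Suc l) ss)"
      show ?thesis
      proof (intro exI[of _ rr] conjI)
        show "rr \<noteq> []" using ll m_def by (cases ss) (auto simp: rr_def)
        show "walk E rr" unfolding rr_def by (intro walk_rev walk_take ipath_walk G(1))
        show "set rr \<subseteq> V" using ss(3) by (auto simp: rr_def dest: in_set_takeD)
        show "u \<notin> set rr" using G(4) by (auto simp: rr_def dest: in_set_takeD)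
        show "{u, last rr} \<in> E" using ss(1) ll m_def by (simp add: rr_def last_rev apex_def)
        show "hd rr = b" using ll m_def by (simp add: rr_def hd_rev last_take_Suc)
        show "\<forall>v\<in>set rr. {a, v} \<notin> E \<and> v \<noteq> a"
        proof
          fix v assume "v \<in> set rr"
          then obtain c where c: "c < Suc l" "c < length ss" "v = ss!c" using in_take_nth by (metis rr_def set_rev)
          show "{a, v} \<notin> E \<and> v \<noteq> a"
          proof
            show "v \<noteq> a" using ans c by auto
            show "{a, v} \<notin> E"
            proof (cases "c = l")
              case True thus ?thesis using b(4) ll c by simp
            next
              case False thus ?thesis using L c by auto
            qed
          qed
        qed
      qed
    next
      assume Hh: "\<forall>y\<in>set [a]. \<forall>c. l < c \<longrightarrow> c < length ss \<longrightarrow> {y, ss!c} \<notin> E"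
      define rr where "rr = drop l ss"
      show ?thesis
      proof (intro exI[of _ rr] conjI)
        show "rr \<noteq> []" using ll m_def by (simp add: rr_def)
        show "walk E rr" unfolding rr_def by (intro walk_drop ipath_walk G(1))
        show "set rr \<subseteq> V" using ss(3) by (auto simp: rr_def dest: in_set_dropD)
        show "u \<notin> set rr" using G(4) by (auto simp: rr_def dest: in_set_dropD)
        show "{u, last rr} \<in> E" using ss(1) ll m_def by (simp add: rr_def apex_def)
        show "hd rr = b" using ll m_def by (simp add: rr_def hd_drop_conv_nth)
        show "\<forall>v\<in>set rr. {a, v} \<notin> E \<and> v \<noteq> a"
        proof
          fix v assume "v \<in> set rr"
          then obtain c where c: "c \<ge> l" "c < length ss" "v = ss!c" using in_drop_nth by (metis rr_def)
          show "{a, v} \<notin> E \<and> v \<noteq> a"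
          proof
            show "v \<noteq> a" using ans c by auto
            show "{a, v} \<notin> E"
            proof (cases "c = l")
              case True thus ?thesis using b(4) ll c by simp
            next
              case False thus ?thesis using Hh c by auto
            qed
          qed
        qed
      qed
    qed
    then obtain rr where rr: "rr \<noteq> []" "walk E rr" "set rr \<subseteq> V" "u \<notin> set rr" "{u, last rr} \<in> E"
       "\<forall>v\<in>set rr. {a, v} \<notin> E \<and> v \<noteq> a" "hd rr = b" by blast
    show ?thesis using route_from[OF rr(1-6), of "set rs"] rr(7) by auto
  qed
  then obtain ts where ts: "ts \<noteq> []" "walk E ts" "set ts \<subseteq> V" "hd ts = b"
    "\<forall>v\<in>set (butlast ts). v \<notin> set rs \<and> {u,v} \<notin> E \<and> v \<noteq> u"
    "\<forall>v\<in>set ts. {a, v} \<notin> E \<and> v \<noteq> a" "last ts \<in> set rs \<or> {u, last ts} \<in> E" "last ts \<noteq> u"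
    by blast
  show False
  proof (rule fin[OF g nc u rs(1) rs(3) j xl e1' _ ts(1-3) ts(5) _ ts(7,8)])
    show "{last xl, hd ts} \<in> E" using e2 ts(4) by simp
    show "\<forall>v\<in>set ts. {rs ! j, v} \<notin> E \<and> v \<noteq> rs ! j" using ts(6) jj by simp
  qed
qed



lemma lc_char:
  "{x,y} \<in> local_chordalize V E u \<longleftrightarrow> {x,y} \<in> E \<or> (x = u \<and> y \<in> Wset V E u) \<or> (y = u \<and> x \<in> Wset V E u)"
  unfolding local_chordalize_def Wset_def
  by (auto simp: doubleton_eq_iff)

lemma hl_mono: "hl E' xs \<Longrightarrow> (\<And>x y. x \<in> set xs \<Longrightarrow> y \<in> set xs \<Longrightarrow> {x,y} \<in> E \<longleftrightarrow> {x,y} \<in> E') \<Longrightarrow> hl E xs"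
  unfolding hl_def by (metis nth_mem)

lemma ipath_mono: "ipath E' xs \<Longrightarrow> (\<And>x y. x \<in> set xs \<Longrightarrow> y \<in> set xs \<Longrightarrow> {x,y} \<in> E \<longleftrightarrow> {x,y} \<in> E') \<Longrightarrow> ipath E xs"
  unfolding ipath_def by (metis nth_mem)

lemma keyE:
  assumes g: "graph V E" and nc: "NC_property V E u" and u: "u \<in> V"
    and ap: "apex (local_chordalize V E u) u rs" and rV: "set rs \<subseteq> V" and ipE: "ipath E rs"
  shows "{u, hd rs} \<in> E"
proof (rule ccontr)
  assume nE: "{u, hd rs} \<notin> E"
  define E' where "E' = local_chordalize V E u"
  note F = apex_facts[OF ap[folded E'_def]]
  define m where "m = length rs"
  define xl where "xl = butlast (tl rs)"
  have m3: "m \<ge> 3" using F(3) m_def by simp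
  have lxl: "length xl = m - 2" by (simp add: xl_def m_def)
  have nxl: "\<And>k. k < m - 2 \<Longrightarrow> xl ! k = rs ! Suc k"
    by (simp add: xl_def m_def nth_butlast nth_tl)
  have xlne: "xl \<noteq> []" using lxl m3 by auto
  have hxl: "hd xl = rs!1" using xlne nxl[of 0] m3 by (simp add: hd_conv_nth)
  have lastxl: "last xl = rs!(m-2)"
  proof -
    have "last xl = xl ! (m - 3)" using xlne lxl by (simp add: last_conv_nth)
    also have "\<dots> = rs ! (m-2)" using nxl[of "m-3"] m3 by (simp add: numeral_3_eq_3 numeral_2_eq_2 Suc_diff_Suc)
    finally show ?thesis .
  qed
  have inxl: "\<And>x. x \<in> set xl \<Longrightarrow> \<exists>t. 0 < t \<and> t < m - 1 \<and> x = rs!t"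
  proof -
    fix x assume "x \<in> set xl"
    then obtain k where "k < m - 2" "x = xl ! k" using lxl by (auto simp: in_set_conv_nth)
    thus "\<exists>t. 0 < t \<and> t < m - 1 \<and> x = rs!t" using nxl by (intro exI[of _ "Suc k"]) auto
  qed
  have a: "hd rs \<in> Wset V E u"
  proof -
    have "{u, hd rs} \<in> E'" using ap by (simp add: apex_def E'_def)
    thus ?thesis using nE unfolding E'_def lc_char using F(4) F(3)
      by (metis hd_in_set list.size(3) not_numeral_le_zero)
  qed
  have bu: "{u, last rs} \<in> E'" using ap by (simp add: apex_def E'_def)
  have b: "last rs \<in> V" "last rs \<noteq> u" "{u, last rs} \<in> E \<or> last rs \<in> Wset V E u"
  proof -
    have "rs \<noteq> []" using m3 m_def by auto
    thus "last rs \<in> V" "last rs \<noteq> u" using rV F(4) last_in_set by auto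
    thus "{u, last rs} \<in> E \<or> last rs \<in> Wset V E u" using bu unfolding E'_def lc_char by auto
  qed
  have rne: "rs \<noteq> []" using m3 m_def by auto
  have ab: "{hd rs, last rs} \<notin> E" using ipath_adj[OF ipE, of 0 "m-1"] rne m3 F(5) F(6) m_def by simp
  have ab2: "hd rs \<noteq> last rs"
  proof -
    have "rs!0 \<noteq> rs!(m-1)" using F(2) m3 m_def by (subst nth_eq_iff_index_eq) auto
    thus ?thesis using F(5) F(6) m_def by simp
  qed
  show False
  proof (rule main[OF g nc u a nE b ab ab2 xlne])
    have "walk E (drop 1 rs)" by (intro walk_drop ipath_walk ipE)
    thus "walk E xl" unfolding xl_def by (intro walk_butlast) (simp add: drop_Suc)
    show "set xl \<subseteq> V" using rV inxl m_def by fastforce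
    show "\<forall>x\<in>set xl. x \<notin> Wset V E u \<and> {u, x} \<notin> E \<and> x \<noteq> u"
    proof
      fix x assume "x \<in> set xl"
      then obtain t where t: "0 < t" "t < m - 1" "x = rs!t" using inxl by blast
      have "{u, x} \<notin> E'" using ap t m_def by (auto simp: apex_def E'_def)
      moreover have "x \<noteq> u" using F(4) t m_def by auto
      ultimately show "x \<notin> Wset V E u \<and> {u, x} \<notin> E \<and> x \<noteq> u" unfolding E'_def lc_char by auto
    qed
    show "{hd rs, hd xl} \<in> E" using ipath_adj[OF ipE, of 0 1] rne hxl F(5) m3 m_def by simp
    show "{last xl, last rs} \<in> E" using ipath_adj[OF ipE, of "m-2" "m-1"] rne lastxl F(6) m3 m_def by (simp add: numeral_2_eq_2 Suc_diff_Suc)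
  qed
qed



theorem theorem2p3:
  fixes V :: "'a set" and E :: "'a set set" and u :: 'a
  assumes "graph V E" and "u \<in> V" and "NC_property V E u"
  shows "holes V (local_chordalize V E u) \<subseteq> holes V E"
proof
  note g = assms(1) and u = assms(2) and nc = assms(3)
  define E' where "E' = local_chordalize V E u"
  have noU: "\<And>x y. x \<noteq> u \<Longrightarrow> y \<noteq> u \<Longrightarrow> {x,y} \<in> E \<longleftrightarrow> {x,y} \<in> E'"
    unfolding E'_def lc_char by auto
  have sub: "\<And>x y. {x,y} \<in> E \<Longrightarrow> {x,y} \<in> E'" unfolding E'_def lc_char by auto
  fix C assume "C \<in> holes V (local_chordalize V E u)"
  then obtain xs where C: "C \<subseteq> V" "hl E' xs" "set xs = C" by (auto simp: holes_def is_hole_hl E'_def)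
  show "C \<in> holes V E"
  proof (cases "u \<in> C")
    case False
    have "hl E xs" using C(2)
    proof (rule hl_mono)
      fix x y assume "x \<in> set xs" "y \<in> set xs"
      hence "x \<noteq> u" "y \<noteq> u" using C(3) False by auto
      thus "{x,y} \<in> E \<longleftrightarrow> {x,y} \<in> E'" by (rule noU)
    qed
    thus ?thesis using C by (auto simp: holes_def is_hole_hl)
  next
    case True
    obtain rs where rs: "apex E' u rs" "set rs = C - {u}" using hl_apex[OF C(2)] True C(3) by auto
    have rV: "set rs \<subseteq> V" using rs C by auto
    have un: "u \<notin> set rs" using rs by auto
    have ipE': "ipath E' rs" using rs by (simp add: apex_def)
    have ipE: "ipath E rs" using ipE'
    proof (rule ipath_mono)
      fix x y assume "x \<in> set rs" "y \<in> set rs"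
      hence "x \<noteq> u" "y \<noteq> u" using un by auto
      thus "{x,y} \<in> E \<longleftrightarrow> {x,y} \<in> E'" by (rule noU)
    qed
    have h: "{u, hd rs} \<in> E" using keyE[OF g nc u rs(1)[unfolded E'_def] rV ipE] .
    have l: "{u, hd (rev rs)} \<in> E"
    proof (rule keyE[OF g nc u _ _ ipath_rev[OF ipE]])
      show "apex (local_chordalize V E u) u (rev rs)" using apex_rev[OF rs(1)] by (simp add: E'_def)
      show "set (rev rs) \<subseteq> V" using rV by simp
    qed
    have ap: "apex E u rs" unfolding apex_def
    proof (intro conjI allI impI)
      show "ipath E rs" by fact
      show "3 \<le> length rs" "u \<notin> set rs" using rs by (auto simp: apex_def)
      show "{u, hd rs} \<in> E" by fact
      show "{u, last rs} \<in> E" using l by (simp add: hd_rev)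
      fix i assume "0 < i" "i < length rs - 1"
      hence "{u, rs!i} \<notin> E'" using rs by (auto simp: apex_def)
      thus "{u, rs!i} \<notin> E" using sub by blast
    qed
    have "insert u (set rs) \<in> holes_at V E u" using apex_hole[OF g ap u rV] .
    moreover have "insert u (set rs) = C" using rs True by auto
    ultimately show ?thesis by (auto simp: holes_at_def)
  qed
qed

end
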